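(* For every compact set $K\subset\Omega$, $$H^N(K)=c_\Omega(K),$$ where $$c_\Omega(K)=\inf\Big\{\iint_{Q_T}|\partial_t\psi+\Delta\psi|\,dx\,dt:\ \psi\in C^{2,1}_{\ell,0}(\overline{Q_T}),\ \psi(x,0)\ge1\text{ for all }x\text{ in a neighborhood of }K\Big\}.$$
   Context: $\Omega\subset\mathbb{R}^N$ ($N\ge1$) is a bounded domain, $T>0$, $Q_T=\Omega\times(0,T)$, and $H^N$ is $N$-dimensional Hausdorff measure on $\mathbb{R}^N$. $C^{2,1}_{\ell,0}(\overline{Q_T})$ is the space of functions in $C^{2,1}(\overline{Q_T})$ (twice continuously differentiable in $x$, once in $t$, up to the boundary) vanishing on $\partial\Omega\times[0,T]\cup\overline\Omega\times\{T\}$. *)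

theory Defs
  imports "HOL-Analysis.Analysis"
begin

text \<open>Functions on Q_T are written as psi :: 'a => real => real (space variable x, time t).\<close>

definition dt :: "('a \<Rightarrow> real \<Rightarrow> real) \<Rightarrow> 'a \<Rightarrow> real \<Rightarrow> real" where
  "dt psi x t = deriv (\<lambda>s. psi x s) t"

definition dx :: "'a::real_normed_vector \<Rightarrow> ('a \<Rightarrow> real \<Rightarrow> real) \<Rightarrow> 'a \<Rightarrow> real \<Rightarrow> real" where
  "dx i psi x t = deriv (\<lambda>h. psi (x + h *\<^sub>R i) t) 0"

definition laplacian :: "('a::euclidean_space \<Rightarrow> real \<Rightarrow> real) \<Rightarrow> 'a \<Rightarrow> real \<Rightarrow> real" where
  "laplacian psi x t = (\<Sum>i\<in>Basis. dx i (dx i psi) x t)"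

definition ext_cont :: "'a::euclidean_space set \<Rightarrow> real \<Rightarrow> ('a \<Rightarrow> real \<Rightarrow> real) \<Rightarrow> bool" where
  "ext_cont Om T f \<longleftrightarrow> (\<exists>g. continuous_on (closure Om \<times> {0..T}) g \<and>
      (\<forall>x\<in>Om. \<forall>t\<in>{0<..<T}. g (x, t) = f x t))"

definition C21 :: "'a::euclidean_space set \<Rightarrow> real \<Rightarrow> ('a \<Rightarrow> real \<Rightarrow> real) \<Rightarrow> bool" where
  "C21 Om T psi \<longleftrightarrow>
     continuous_on (closure Om \<times> {0..T}) (\<lambda>(x, t). psi x t) \<and>
     (\<forall>x\<in>Om. \<forall>t\<in>{0<..<T}.
        (\<exists>D. ((\<lambda>s. psi x s) has_real_derivative D) (at t)) \<and>
        (\<forall>i\<in>Basis. \<exists>D. ((\<lambda>h. psi (x + h *\<^sub>R i) t) has_real_derivative D) (at 0)) \<and>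
        (\<forall>i\<in>Basis. \<forall>j\<in>Basis.
           \<exists>D. ((\<lambda>h. dx i psi (x + h *\<^sub>R j) t) has_real_derivative D) (at 0))) \<and>
     ext_cont Om T (dt psi) \<and>
     (\<forall>i\<in>Basis. ext_cont Om T (dx i psi)) \<and>
     (\<forall>i\<in>Basis. \<forall>j\<in>Basis. ext_cont Om T (dx j (dx i psi)))"

definition C21_l0 :: "'a::euclidean_space set \<Rightarrow> real \<Rightarrow> ('a \<Rightarrow> real \<Rightarrow> real) \<Rightarrow> bool" where
  "C21_l0 Om T psi \<longleftrightarrow> C21 Om T psi \<and>
     (\<forall>x\<in>frontier Om. \<forall>t\<in>{0..T}. psi x t = 0) \<and>
     (\<forall>x\<in>closure Om. psi x T = 0)"

definition cap :: "'a::euclidean_space set \<Rightarrow> real \<Rightarrow> 'a set \<Rightarrow> ennreal" where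
  "cap Om T K = (INF psi \<in> {psi. C21_l0 Om T psi \<and>
        (\<exists>U. open U \<and> K \<subseteq> U \<and> (\<forall>x\<in>U. psi x 0 \<ge> 1))}.
      \<integral>\<^sup>+ p. indicator (Om \<times> {0<..<T}) p *
              ennreal \<bar>dt psi (fst p) (snd p) + laplacian psi (fst p) (snd p)\<bar> \<partial>lborel)"

end

theory Submission
  imports Defs
begin

lemma has_derivative_within_Un:
  assumes "(f has_derivative f') (at x within s)" "(f has_derivative f') (at x within t)"
  shows "(f has_derivative f') (at x within (s \<union> t))"
  using assms unfolding has_derivative_within by (auto simp: Lim_within_Un)

lemma DERIV_glue:
  fixes f f1 f2 :: "real \<Rightarrow> real"
  assumes "DERIV f1 a :> D" "DERIV f2 a :> D" "\<And>x. x \<le> a \<Longrightarrow> f x = f1 x" "\<And>x. x \<ge> a \<Longrightarrow> f x = f2 x"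
  shows "DERIV f a :> D"
proof -
  have 1: "(f has_field_derivative D) (at a within {..a})"
    by (rule has_field_derivative_transform_within[where f=f1 and d=1])
       (use has_field_derivative_at_within[OF assms(1)] assms(3) in auto)
  have 2: "(f has_field_derivative D) (at a within {a..})"
    by (rule has_field_derivative_transform_within[where f=f2 and d=1])
       (use has_field_derivative_at_within[OF assms(2)] assms(4) in auto)
  have "(f has_field_derivative D) (at a within ({..a} \<union> {a..}))"
    using 1 2 unfolding has_field_derivative_def by (rule has_derivative_within_Un)
  moreover have "{..a} \<union> {a..} = (UNIV::real set)" by auto
  ultimately show ?thesis by simp
qed

definition pw3 :: "(real \<Rightarrow> real) \<Rightarrow> (real \<Rightarrow> real) \<Rightarrow> (real \<Rightarrow> real) \<Rightarrow> real \<Rightarrow> real" where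
  "pw3 p0 p1 p2 v = (if v \<le> 0 then p0 v else if v \<le> 1 then p1 v else p2 v)"

lemma pw3_deriv:
  assumes d0: "\<And>x. DERIV p0 x :> q0 x" and d1: "\<And>x. DERIV p1 x :> q1 x" and d2: "\<And>x. DERIV p2 x :> q2 x"
    and e0: "p0 0 = p1 0" "q0 0 = q1 0" and e1: "p1 1 = p2 1" "q1 1 = q2 1"
  shows "DERIV (pw3 p0 p1 p2) v :> pw3 q0 q1 q2 v"
proof -
  consider "v < 0" | "v = 0" | "0 < v" "v < 1" | "v = 1" | "v > 1" by linarith
  then show ?thesis
  proof cases
    case 1
    have ev: "eventually (\<lambda>x. x \<in> {..<0}) (nhds v)" by (rule eventually_nhds_in_open) (use 1 in auto)
    have "DERIV (pw3 p0 p1 p2) v :> q0 v \<longleftrightarrow> DERIV p0 v :> q0 v"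
      by (rule DERIV_cong_ev) (auto simp: pw3_def intro!: eventually_mono[OF ev])
    then show ?thesis using d0 1 by (simp add: pw3_def)
  next
    case 3
    have ev: "eventually (\<lambda>x. x \<in> {0<..<1}) (nhds v)" by (rule eventually_nhds_in_open) (use 3 in auto)
    have "DERIV (pw3 p0 p1 p2) v :> q1 v \<longleftrightarrow> DERIV p1 v :> q1 v"
      by (rule DERIV_cong_ev) (auto simp: pw3_def intro!: eventually_mono[OF ev])
    then show ?thesis using d1 3 by (simp add: pw3_def)
  next
    case 5
    have ev: "eventually (\<lambda>x. x \<in> {1<..}) (nhds v)" by (rule eventually_nhds_in_open) (use 5 in auto)
    have "DERIV (pw3 p0 p1 p2) v :> q2 v \<longleftrightarrow> DERIV p2 v :> q2 v"
      by (rule DERIV_cong_ev) (auto simp: pw3_def intro!: eventually_mono[OF ev])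
    then show ?thesis using d2 5 by (simp add: pw3_def)
  next
    case 2
    let ?g = "\<lambda>x. if x \<le> 0 then p0 x else p1 x"
    have ev: "eventually (\<lambda>x. x \<in> {..<1}) (nhds (0::real))" by (rule eventually_nhds_in_open) auto
    have "DERIV ?g 0 :> q0 0"
      by (rule DERIV_glue[where ?f1.0=p0 and ?f2.0=p1]) (use d0[of 0] d1[of 0] e0 in auto)
    moreover have "DERIV (pw3 p0 p1 p2) v :> q0 0 \<longleftrightarrow> DERIV ?g 0 :> q0 0"
      by (rule DERIV_cong_ev) (use 2 in \<open>auto simp: pw3_def intro!: eventually_mono[OF ev]\<close>)
    ultimately show ?thesis using 2 by (simp add: pw3_def)
  next
    case 4
    let ?g = "\<lambda>x. if x \<le> 1 then p1 x else p2 x"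
    have ev: "eventually (\<lambda>x. x \<in> {0<..}) (nhds (1::real))" by (rule eventually_nhds_in_open) auto
    have "DERIV ?g 1 :> q1 1"
      by (rule DERIV_glue[where ?f1.0=p1 and ?f2.0=p2]) (use d1[of 1] d2[of 1] e1 in auto)
    moreover have "DERIV (pw3 p0 p1 p2) v :> q1 1 \<longleftrightarrow> DERIV ?g 1 :> q1 1"
      by (rule DERIV_cong_ev) (use 4 in \<open>auto simp: pw3_def intro!: eventually_mono[OF ev]\<close>)
    ultimately show ?thesis using 4 by (simp add: pw3_def)
  qed
qed

definition "sA = pw3 (\<lambda>y. 0) (\<lambda>y. (5/2)*y^4 - 3*y^5 + y^6) (\<lambda>y. y - 1/2)"
definition "sS = pw3 (\<lambda>y. 0) (\<lambda>y. 10*y^3 - 15*y^4 + 6*y^5) (\<lambda>y. 1)"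
definition "sS1 = pw3 (\<lambda>y. 0) (\<lambda>y. 30*y^2 - 60*y^3 + 30*y^4) (\<lambda>y. 0)"
definition "sS2 = pw3 (\<lambda>y. 0) (\<lambda>y. 60*y - 180*y^2 + 120*y^3) (\<lambda>y. 0)"

lemma sA_deriv: "DERIV sA v :> sS v"
  unfolding sA_def sS_def
  by (rule pw3_deriv) (auto intro!: derivative_eq_intros simp: algebra_simps)

lemma sS_deriv: "DERIV sS v :> sS1 v"
  unfolding sS1_def sS_def
  by (rule pw3_deriv) (auto intro!: derivative_eq_intros simp: algebra_simps)

lemma sS1_deriv: "DERIV sS1 v :> sS2 v"
  unfolding sS1_def sS2_def
  by (rule pw3_deriv) (auto intro!: derivative_eq_intros simp: algebra_simps)

lemma cont_glue:
  fixes f f1 f2 :: "real \<Rightarrow> real"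
  assumes "isCont f1 a" "isCont f2 a" "\<And>x. x \<le> a \<Longrightarrow> f x = f1 x" "\<And>x. x \<ge> a \<Longrightarrow> f x = f2 x"
  shows "isCont f a"
proof -
  have 1: "continuous (at a within {..a}) f"
    by (rule continuous_transform_within[OF continuous_at_imp_continuous_within[OF assms(1)], where \<delta>=1]) (use assms in auto)
  have 2: "continuous (at a within {a..}) f"
    by (rule continuous_transform_within[OF continuous_at_imp_continuous_within[OF assms(2)], where \<delta>=1]) (use assms in auto)
  have "continuous (at a within ({..a} \<union> {a..})) f"
    using 1 2 unfolding continuous_within by (simp add: Lim_within_Un)
  moreover have "{..a} \<union> {a..} = (UNIV::real set)" by auto
  ultimately show ?thesis by (simp add: continuous_within)
qed

lemma pw3_cont:
  assumes c0: "\<And>x. isCont p0 x" and c1: "\<And>x. isCont p1 x" and c2: "\<And>x. isCont p2 x"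
    and e0: "p0 0 = p1 0" and e1: "p1 1 = p2 1"
  shows "isCont (pw3 p0 p1 p2) v"
proof -
  consider "v < 0" | "v = 0" | "0 < v" "v < 1" | "v = 1" | "v > 1" by linarith
  then show ?thesis
  proof cases
    case 1
    have ev: "eventually (\<lambda>x. x \<in> {..<0}) (nhds v)" by (rule eventually_nhds_in_open) (use 1 in auto)
    have "isCont (pw3 p0 p1 p2) v \<longleftrightarrow> isCont p0 v"
      by (rule isCont_cong) (auto simp: pw3_def intro!: eventually_mono[OF ev])
    then show ?thesis using c0 by simp
  next
    case 3
    have ev: "eventually (\<lambda>x. x \<in> {0<..<1}) (nhds v)" by (rule eventually_nhds_in_open) (use 3 in auto)
    have "isCont (pw3 p0 p1 p2) v \<longleftrightarrow> isCont p1 v"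
      by (rule isCont_cong) (auto simp: pw3_def intro!: eventually_mono[OF ev])
    then show ?thesis using c1 by simp
  next
    case 5
    have ev: "eventually (\<lambda>x. x \<in> {1<..}) (nhds v)" by (rule eventually_nhds_in_open) (use 5 in auto)
    have "isCont (pw3 p0 p1 p2) v \<longleftrightarrow> isCont p2 v"
      by (rule isCont_cong) (auto simp: pw3_def intro!: eventually_mono[OF ev])
    then show ?thesis using c2 by simp
  next
    case 2
    let ?g = "\<lambda>x. if x \<le> 0 then p0 x else p1 x"
    have ev: "eventually (\<lambda>x. x \<in> {..<1}) (nhds (0::real))" by (rule eventually_nhds_in_open) auto
    have "isCont ?g 0"
      by (rule cont_glue[where ?f1.0=p0 and ?f2.0=p1]) (use c0 c1 e0 in \<open>auto\<close>)
    moreover have "isCont (pw3 p0 p1 p2) 0 \<longleftrightarrow> isCont ?g 0"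
      by (rule isCont_cong) (auto simp: pw3_def intro!: eventually_mono[OF ev])
    ultimately show ?thesis using 2 by simp
  next
    case 4
    let ?g = "\<lambda>x. if x \<le> 1 then p1 x else p2 x"
    have ev: "eventually (\<lambda>x. x \<in> {0<..}) (nhds (1::real))" by (rule eventually_nhds_in_open) auto
    have "isCont ?g 1"
      by (rule cont_glue[where ?f1.0=p1 and ?f2.0=p2]) (use c1 c2 e1 in \<open>auto\<close>)
    moreover have "isCont (pw3 p0 p1 p2) 1 \<longleftrightarrow> isCont ?g 1"
      by (rule isCont_cong) (auto simp: pw3_def intro!: eventually_mono[OF ev])
    ultimately show ?thesis using 4 by simp
  qed
qed

lemma sS2_cont: "isCont sS2 v"
  unfolding sS2_def by (rule pw3_cont) auto

lemma integral_translate: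
  fixes G :: "'a::euclidean_space \<Rightarrow> real"
  assumes "G \<in> borel_measurable borel"
  shows "integral\<^sup>L lborel (\<lambda>x. G (x + c)) = integral\<^sup>L lborel G"
proof -
  have "integral\<^sup>L lborel G = integral\<^sup>L (distr lborel borel ((+) c)) G"
    by (simp add: lborel_distr_plus)
  also have "\<dots> = integral\<^sup>L lborel (\<lambda>x. G (c + x))"
    by (rule integral_distr) (use assms in auto)
  finally show ?thesis by (simp add: add.commute)
qed

lemma deriv_integral_zero:
  fixes G g :: "'a::euclidean_space \<Rightarrow> real" and e :: 'a and C :: "'a set"
  assumes C: "compact C" and G0: "\<And>x. x \<notin> C \<Longrightarrow> G x = 0" and g0: "\<And>x. x \<notin> C \<Longrightarrow> g x = 0"
    and D: "\<And>x. DERIV (\<lambda>h. G (x + h *\<^sub>R e)) 0 :> g x"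
    and gc: "continuous_on UNIV g" and Gc: "continuous_on UNIV G"
  shows "integral\<^sup>L lborel g = 0"
proof -
  have "compact (g ` C)" using C gc by (intro compact_continuous_image) (auto intro: continuous_on_subset)
  then obtain M where M: "\<And>y. y \<in> g ` C \<Longrightarrow> norm y \<le> M"
    using compact_imp_bounded bounded_iff by metis
  have Mb: "\<bar>g x\<bar> \<le> max M 0" for x
    using M[of "g x"] g0[of x] by (cases "x \<in> C") auto
  define M' where "M' = max M 0"
  have M'0: "M' \<ge> 0" by (simp add: M'_def)
  have D': "DERIV (\<lambda>h. G (x + h *\<^sub>R e)) s :> g (x + s *\<^sub>R e)" for x s
  proof -
    have "DERIV (\<lambda>h. G ((x + s *\<^sub>R e) + h *\<^sub>R e)) 0 :> g (x + s *\<^sub>R e)" by (rule D)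
    then have "DERIV (\<lambda>h. G (x + (h + s) *\<^sub>R e)) 0 :> g (x + s *\<^sub>R e)"
      by (simp add: algebra_simps scaleR_add_left)
    then show ?thesis using DERIV_shift[of "\<lambda>h. G (x + h *\<^sub>R e)" "g (x + s *\<^sub>R e)" 0 s] by simp
  qed
  have lip: "\<bar>G (x + h *\<^sub>R e) - G x\<bar> \<le> M' * h" if hp: "h > 0" for x h
  proof -
    have "\<exists>z. 0 < z \<and> z < h \<and> G (x + h *\<^sub>R e) - G (x + 0 *\<^sub>R e) = (h - 0) * g (x + z *\<^sub>R e)"
      by (rule MVT2[of 0 h "\<lambda>h. G (x + h *\<^sub>R e)" "\<lambda>s. g (x + s *\<^sub>R e)"]) (use hp D' in auto)
    then obtain z where "G (x + h *\<^sub>R e) - G (x + 0 *\<^sub>R e) = (h - 0) * g (x + z *\<^sub>R e)" by blast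
    then have "\<bar>G (x + h *\<^sub>R e) - G x\<bar> = h * \<bar>g (x + z *\<^sub>R e)\<bar>" using hp by (simp add: abs_mult)
    also have "\<dots> \<le> h * M'" using Mb[of "x + z *\<^sub>R e"] hp by (simp add: M'_def mult_left_mono)
    finally show ?thesis by (simp add: mult.commute)
  qed
  define C' where "C' = (\<lambda>(c, s). c - s *\<^sub>R e) ` (C \<times> {0..1::real})"
  have C': "compact C'" unfolding C'_def
    by (intro compact_continuous_image compact_Times C compact_Icc) (auto intro!: continuous_intros simp: case_prod_beta)
  have out: "G (x + h *\<^sub>R e) - G x = 0" if "x \<notin> C'" "0 < h" "h \<le> 1" for x h
  proof -
    have "x \<notin> C" using that(1) unfolding C'_def by (force intro: image_eqI[where x="(x,0)"])
    moreover have "x + h *\<^sub>R e \<notin> C"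
    proof
      assume "x + h *\<^sub>R e \<in> C"
      then have "x \<in> C'" unfolding C'_def using that by (force intro!: image_eqI[where x="(x + h *\<^sub>R e, h)"])
      then show False using that by simp
    qed
    ultimately show ?thesis using G0 by simp
  qed
  define hs where "hs n = inverse (real (Suc n))" for n
  have hs0: "hs n > 0" "hs n \<le> 1" for n by (auto simp: hs_def field_simps)
  define F where "F n x = (G (x + hs n *\<^sub>R e) - G x) / hs n" for n x
  have Gm: "G \<in> borel_measurable borel" using Gc by (intro borel_measurable_continuous_onI) simp
  have gm: "g \<in> borel_measurable borel" using gc by (intro borel_measurable_continuous_onI) simp
  have Gint: "integrable lborel G"
  proof -
    have "integrable lborel (\<lambda>x. indicator C x *\<^sub>R G x)"
      by (rule borel_integrable_compact[OF C]) (use Gc in \<open>auto intro: continuous_on_subset\<close>)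
    moreover have "(\<lambda>x. indicator C x *\<^sub>R G x) = G" using G0 by (auto simp: indicator_def fun_eq_iff)
    ultimately show ?thesis by simp
  qed
  have F0: "integral\<^sup>L lborel (F n) = 0" for n
  proof -
    have i1: "integrable lborel (\<lambda>x. G (x + hs n *\<^sub>R e))"
    proof -
      have "integrable (distr lborel borel ((+) (hs n *\<^sub>R e))) G" using Gint by (simp add: lborel_distr_plus)
      then have "integrable lborel (\<lambda>x. G (hs n *\<^sub>R e + x))"
        by (subst (asm) integrable_distr_eq) (use Gm in auto)
      then show ?thesis by (simp add: add.commute)
    qed
    have "integral\<^sup>L lborel (F n) = (integral\<^sup>L lborel (\<lambda>x. G (x + hs n *\<^sub>R e)) - integral\<^sup>L lborel G) / hs n"
      unfolding F_def using i1 Gint by simp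
    also have "\<dots> = 0" by (simp add: integral_translate[OF Gm])
    finally show ?thesis .
  qed
  have wint: "integrable lborel (\<lambda>x. indicator C' x *\<^sub>R M')"
    by (rule borel_integrable_compact[OF C']) auto
  have lim: "(\<lambda>n. integral\<^sup>L lborel (F n)) \<longlonglongrightarrow> integral\<^sup>L lborel g"
  proof (rule integral_dominated_convergence[where w="\<lambda>x. indicator C' x *\<^sub>R M'"])
    show "g \<in> borel_measurable lborel" using gm by simp
    show "F n \<in> borel_measurable lborel" for n unfolding F_def using Gm by measurable
    show "integrable lborel (\<lambda>x. indicator C' x *\<^sub>R M')" by (rule wint)
    show "AE x in lborel. norm (F n x) \<le> indicator C' x *\<^sub>R M'" for n
    proof (rule AE_I2)
      fix x
      show "norm (F n x) \<le> indicator C' x *\<^sub>R M'"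
      proof (cases "x \<in> C'")
        case True
        have "norm (F n x) = \<bar>G (x + hs n *\<^sub>R e) - G x\<bar> / hs n" using hs0[of n] by (simp add: F_def)
        also have "\<dots> \<le> M' * hs n / hs n" using lip[of "hs n" x] hs0[of n] by (intro divide_right_mono) auto
        also have "\<dots> = M'" using hs0[of n] by simp
        finally show ?thesis using True by simp
      next
        case False
        then show ?thesis using out[of x "hs n"] hs0[of n] by (simp add: F_def)
      qed
    qed
    show "AE x in lborel. (\<lambda>n. F n x) \<longlonglongrightarrow> g x"
    proof (rule AE_I2)
      fix x
      have "((\<lambda>h. (G (x + h *\<^sub>R e) - G (x + 0 *\<^sub>R e)) / h) \<longlongrightarrow> g x) (at 0)"
        using D[of x] unfolding DERIV_def by simp
      moreover have "filterlim hs (at 0) sequentially"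
      proof -
        have hseq: "hs = (\<lambda>n. inverse (real (Suc n)))" by (simp add: hs_def fun_eq_iff)
        show ?thesis
          unfolding filterlim_at
        proof (rule conjI)
          show "hs \<longlonglongrightarrow> 0" using hseq LIMSEQ_inverse_real_of_nat by simp
          show "\<forall>\<^sub>F n in sequentially. hs n \<in> UNIV \<and> hs n \<noteq> 0"
            by (rule always_eventually) (use hs0 in \<open>simp add: less_imp_neq[symmetric]\<close>)
        qed
      qed
      ultimately have "(\<lambda>n. (G (x + hs n *\<^sub>R e) - G (x + 0 *\<^sub>R e)) / hs n) \<longlonglongrightarrow> g x"
        by (rule filterlim_compose)
      then show "(\<lambda>n. F n x) \<longlonglongrightarrow> g x" by (simp add: F_def)
    qed
  qed
  then have "(\<lambda>n. 0::real) \<longlonglongrightarrow> integral\<^sup>L lborel g" using F0 by simp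
  then show ?thesis using LIMSEQ_const_iff by metis
qed

lemma sS_simps: "v \<le> 0 \<Longrightarrow> sS v = 0" "v \<ge> 1 \<Longrightarrow> sS v = 1"
  "v \<le> 0 \<Longrightarrow> sS1 v = 0" "v \<ge> 1 \<Longrightarrow> sS1 v = 0"
  "v \<le> 0 \<Longrightarrow> sA v = 0" "v \<ge> 1 \<Longrightarrow> sA v = v - 1/2"
  by (auto simp: sS_def sS1_def sA_def pw3_def)

lemma sS_bounds: "0 \<le> sS y" "sS y \<le> 1" "0 \<le> sS1 y" "0 \<le> sA y"
proof -
  have a: "0 \<le> 10*y^3 - 15*y^4 + 6*y^5" if "0 \<le> y" "y \<le> 1"
  proof -
    have "10*y^3 - 15*y^4 + 6*y^5 = y^3 * (6*y^2 - 15*y + 10)" by (simp add: algebra_simps power2_eq_square power3_eq_cube power_numeral_reduce)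
    moreover have "6*y^2 - 15*y + 10 \<ge> 0"
    proof -
      have "6*y^2 - 15*y + 10 = 6*(y - 5/4)^2 + 5/8" by (simp add: algebra_simps power2_eq_square)
      then show ?thesis by simp
    qed
    ultimately show ?thesis using that by simp
  qed
  have b: "10*y^3 - 15*y^4 + 6*y^5 \<le> 1" if "0 \<le> y" "y \<le> 1"
  proof -
    have "1 - (10*y^3 - 15*y^4 + 6*y^5) = (1-y)^3 * (1 + 3*y + 6*y^2)"
      by (simp add: algebra_simps power2_eq_square power3_eq_cube power_numeral_reduce)
    moreover have "(1-y)^3 \<ge> 0" using that by simp
    moreover have "1 + 3*y + 6*y^2 \<ge> 0" using that by simp
    ultimately show ?thesis by (metis diff_ge_0_iff_ge mult_nonneg_nonneg)
  qed
  have c: "0 \<le> 30*y^2 - 60*y^3 + 30*y^4"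
  proof -
    have "30*y^2 - 60*y^3 + 30*y^4 = 30 * (y*(1-y))^2" by (simp add: algebra_simps power2_eq_square power3_eq_cube power_numeral_reduce)
    then show ?thesis by simp
  qed
  have d: "0 \<le> (5/2)*y^4 - 3*y^5 + y^6"
  proof -
    have "(5/2)*y^4 - 3*y^5 + y^6 = y^4 * ((y - 3/2)^2 + 1/4)" by (simp add: algebra_simps power2_eq_square power3_eq_cube power_numeral_reduce)
    then show ?thesis by simp
  qed
  show "0 \<le> sS y" "sS y \<le> 1" "0 \<le> sS1 y" "0 \<le> sA y"
    using a b c d by (auto simp: sS_def sS1_def sA_def pw3_def)
qed

lemma sS_cont: "isCont sS v" "isCont sS1 v" "isCont sA v"
  using DERIV_isCont[OF sS_deriv] DERIV_isCont[OF sS1_deriv] DERIV_isCont[OF sA_deriv] by auto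

lemma bounded_on_compact:
  fixes h :: "'b::topological_space \<Rightarrow> real"
  assumes "compact S" "continuous_on S h"
  obtains B where "\<And>x. x \<in> S \<Longrightarrow> \<bar>h x\<bar> \<le> B"
proof -
  have "compact (h ` S)" using assms by (rule compact_continuous_image[rotated])
  then obtain B where "\<And>y. y \<in> h ` S \<Longrightarrow> norm y \<le> B"
    using compact_imp_bounded bounded_iff by metis
  then have "\<forall>x\<in>S. \<bar>h x\<bar> \<le> B" by auto
  then show ?thesis using that by blast
qed

lemma integrable_bdd_open:
  fixes F :: "'b::euclidean_space \<Rightarrow> real"
  assumes Q: "open Q" "bounded Q" and c: "continuous_on Q F" and B: "\<And>x. x \<in> Q \<Longrightarrow> \<bar>F x\<bar> \<le> B"
  shows "integrable lborel (\<lambda>x. indicator Q x * F x)"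
proof (rule Bochner_Integration.integrable_bound)
  show "integrable lborel (\<lambda>x. indicator (closure Q) x *\<^sub>R B)"
    by (rule borel_integrable_compact) (use Q in \<open>auto simp: compact_closure\<close>)
  have "(\<lambda>x. indicator Q x *\<^sub>R F x) \<in> borel_measurable borel"
    by (rule borel_measurable_continuous_on_indicator) (use Q c in auto)
  then show "(\<lambda>x. indicator Q x * F x) \<in> borel_measurable lborel" by simp
  show "AE x in lborel. norm (indicator Q x * F x) \<le> norm (indicator (closure Q) x *\<^sub>R B)"
  proof (rule AE_I2)
    fix x show "norm (indicator Q x * F x) \<le> norm (indicator (closure Q) x *\<^sub>R B)"
      using B[of x] closure_subset[of Q] by (cases "x \<in> Q") (auto simp: indicator_def)
  qed
qed

lemma FTC_open:
  fixes f F :: "real \<Rightarrow> real"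
  assumes T: "0 < T" and cF: "continuous_on {0..T} F" and dF: "\<And>t. t \<in> {0<..<T} \<Longrightarrow> DERIV F t :> f t"
    and cf: "continuous_on {0<..<T} f" and B: "\<And>t. t \<in> {0<..<T} \<Longrightarrow> \<bar>f t\<bar> \<le> B"
  shows "integral\<^sup>L lborel (\<lambda>t. indicator {0<..<T} t * f t) = F T - F 0"
proof -
  have "(f has_integral (F T - F 0)) {0..T}"
    by (rule fundamental_theorem_of_calculus_interior) (use T cF dF in \<open>auto simp: has_real_derivative_iff_has_vector_derivative[symmetric]\<close>)
  then have "(f has_integral (F T - F 0)) {0<..<T}"
    using has_integral_open_interval[of f "F T - F 0" 0 T] by simp
  have "((\<lambda>t. indicator {0<..<T} t * f t) has_integral (F T - F 0)) UNIV"
  proof -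
    have "(\<lambda>t. indicator {0<..<T} t * f t) = (\<lambda>t. if t \<in> {0<..<T} then f t else 0)"
      by (auto simp: fun_eq_iff indicator_def)
    then show ?thesis using \<open>(f has_integral (F T - F 0)) {0<..<T}\<close> has_integral_restrict_UNIV by metis
  qed
  moreover have "integrable lborel (\<lambda>t. indicator {0<..<T} t * f t)"
    by (rule integrable_bdd_open[OF _ _ cf B]) auto
  ultimately show ?thesis using has_integral_integral_real has_integral_unique by blast
qed

lemma cont_slice1:
  assumes "continuous_on (A \<times> B) (\<lambda>(x,t). f x t)" "t \<in> B"
  shows "continuous_on A (\<lambda>x. f x t)"
proof -
  have "continuous_on ((\<lambda>x. (x,t)) ` A) (\<lambda>(x,t). f x t)"
    by (rule continuous_on_subset[OF assms(1)]) (use assms(2) in auto)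
  then have "continuous_on A ((\<lambda>(x,t). f x t) \<circ> (\<lambda>x. (x,t)))"
    by (intro continuous_on_compose continuous_intros)
  then show ?thesis by (simp add: o_def)
qed

lemma cont_slice2:
  assumes "continuous_on (A \<times> B) (\<lambda>(x,t). f x t)" "x \<in> A"
  shows "continuous_on B (\<lambda>t. f x t)"
proof -
  have "continuous_on ((\<lambda>t. (x,t)) ` B) (\<lambda>(x,t). f x t)"
    by (rule continuous_on_subset[OF assms(1)]) (use assms(2) in auto)
  then have "continuous_on B ((\<lambda>(x,t). f x t) \<circ> (\<lambda>t. (x,t)))"
    by (intro continuous_on_compose continuous_intros)
  then show ?thesis by (simp add: o_def)
qed

lemma ext_cont_props:
  fixes Om :: "'a::euclidean_space set"
  assumes Om: "open Om" "bounded Om" and E: "ext_cont Om T f"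
  shows "continuous_on (Om \<times> {0<..<T}) (\<lambda>(x,t). f x t)"
    and "\<exists>B. \<forall>x\<in>Om. \<forall>t\<in>{0<..<T}. \<bar>f x t\<bar> \<le> B"
    and "t \<in> {0<..<T} \<Longrightarrow> continuous_on Om (\<lambda>x. f x t)"
    and "x \<in> Om \<Longrightarrow> continuous_on {0<..<T} (\<lambda>t. f x t)"
proof -
  obtain g where gc: "continuous_on (closure Om \<times> {0..T}) g"
    and gf: "\<And>x t. x \<in> Om \<Longrightarrow> t \<in> {0<..<T} \<Longrightarrow> g (x, t) = f x t"
    using E unfolding ext_cont_def by blast
  have sub: "Om \<times> {0<..<T} \<subseteq> closure Om \<times> {0..T}" using closure_subset by auto
  show c: "continuous_on (Om \<times> {0<..<T}) (\<lambda>(x,t). f x t)"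
    using continuous_on_subset[OF gc sub] by (rule continuous_on_eq) (auto simp: gf)
  obtain B where "\<And>p. p \<in> closure Om \<times> {0..T} \<Longrightarrow> \<bar>g p\<bar> \<le> B"
    using bounded_on_compact[OF _ gc] Om by (metis compact_Times compact_Icc compact_closure)
  then show "\<exists>B. \<forall>x\<in>Om. \<forall>t\<in>{0<..<T}. \<bar>f x t\<bar> \<le> B"
    using sub gf by (metis (no_types, lifting) mem_Sigma_iff subsetD)
  show "continuous_on Om (\<lambda>x. f x t)" if "t \<in> {0<..<T}"
    using cont_slice1[OF c] that by auto
  show "continuous_on {0<..<T} (\<lambda>t. f x t)" if "x \<in> Om"
    using cont_slice2[OF c] that by auto
qed

lemma C21_u_cont:
  fixes Om :: "'a::euclidean_space set"
  assumes "C21 Om T u"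
  shows "t \<in> {0..T} \<Longrightarrow> continuous_on (closure Om) (\<lambda>x. u x t)"
    and "x \<in> closure Om \<Longrightarrow> continuous_on {0..T} (\<lambda>t. u x t)"
proof -
  have c: "continuous_on (closure Om \<times> {0..T}) (\<lambda>(x, t). u x t)" using assms unfolding C21_def by blast
  show "continuous_on (closure Om) (\<lambda>x. u x t)" if "t \<in> {0..T}"
    using cont_slice1[OF c] that by auto
  show "continuous_on {0..T} (\<lambda>t. u x t)" if "x \<in> closure Om"
    using cont_slice2[OF c] that by auto
qed

lemma C21_derivs:
  fixes Om :: "'a::euclidean_space set"
  assumes "C21 Om T u" "x \<in> Om" "t \<in> {0<..<T}"
  shows "DERIV (\<lambda>s. u x s) t :> dt u x t"
    and "i \<in> Basis \<Longrightarrow> DERIV (\<lambda>h. u (x + h *\<^sub>R i) t) 0 :> dx i u x t"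
    and "i \<in> Basis \<Longrightarrow> j \<in> Basis \<Longrightarrow> DERIV (\<lambda>h. dx i u (x + h *\<^sub>R j) t) 0 :> dx j (dx i u) x t"
proof -
  have E: "(\<exists>D. ((\<lambda>s. u x s) has_real_derivative D) (at t)) \<and>
        (\<forall>i\<in>Basis. \<exists>D. ((\<lambda>h. u (x + h *\<^sub>R i) t) has_real_derivative D) (at 0)) \<and>
        (\<forall>i\<in>Basis. \<forall>j\<in>Basis.
           \<exists>D. ((\<lambda>h. dx i u (x + h *\<^sub>R j) t) has_real_derivative D) (at 0))"
    using assms unfolding C21_def by blast
  show "DERIV (\<lambda>s. u x s) t :> dt u x t"
    using E DERIV_imp_deriv unfolding dt_def by metis
  show "DERIV (\<lambda>h. u (x + h *\<^sub>R i) t) 0 :> dx i u x t" if "i \<in> Basis"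
    using E DERIV_imp_deriv that unfolding dx_def by metis
  show "DERIV (\<lambda>h. dx i u (x + h *\<^sub>R j) t) 0 :> dx j (dx i u) x t" if "i \<in> Basis" "j \<in> Basis"
    using E DERIV_imp_deriv that unfolding dx_def[of j] by metis
qed

lemma sS1_le: "sS1 y \<le> 30"
proof -
  have "30*y^2 - 60*y^3 + 30*y^4 \<le> 30" if "0 \<le> y" "y \<le> 1"
  proof -
    have "30*y^2 - 60*y^3 + 30*y^4 = 30 * (y*(1-y))^2" by (simp add: algebra_simps power2_eq_square power3_eq_cube power_numeral_reduce)
    moreover have "(y*(1-y))^2 \<le> 1" using that by (intro power_le_one) (auto simp: mult_le_one)
    ultimately show ?thesis by simp
  qed
  then show ?thesis by (auto simp: sS1_def pw3_def)
qed

definition pp :: "real \<Rightarrow> real \<Rightarrow> real" where "pp d s = sS ((s - d) / d)"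
definition pp1 :: "real \<Rightarrow> real \<Rightarrow> real" where "pp1 d s = sS1 ((s - d) / d) / d"
definition PP :: "real \<Rightarrow> real \<Rightarrow> real" where "PP d s = d * sA ((s - d) / d)"

lemma pp_deriv: "d \<noteq> 0 \<Longrightarrow> DERIV (pp d) s :> pp1 d s"
  unfolding pp_def[abs_def] pp1_def
  by (rule DERIV_chain2[OF sS_deriv, THEN DERIV_cong]) (auto intro!: derivative_eq_intros)

lemma PP_deriv: "d \<noteq> 0 \<Longrightarrow> DERIV (PP d) s :> pp d s"
  unfolding PP_def[abs_def] pp_def
  by (rule DERIV_cmult[OF DERIV_chain2[OF sA_deriv], THEN DERIV_cong]) (auto intro!: derivative_eq_intros)

lemma pp_props:
  assumes "d > 0"
  shows "s \<le> d \<Longrightarrow> pp d s = 0" "s \<le> d \<Longrightarrow> pp1 d s = 0" "0 \<le> pp d s" "pp d s \<le> 1"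
    "0 \<le> pp1 d s" "pp1 d s \<le> 30 / d" "0 \<le> PP d s" "PP d 0 = 0"
    "s \<ge> 2 * d \<Longrightarrow> PP d s = s - 3 * d / 2"
  using assms sS_bounds[of "(s - d) / d"] sS1_le[of "(s - d) / d"]
  by (auto simp: pp_def pp1_def PP_def sS_simps divide_le_0_iff field_simps divide_right_mono)

lemma pp_cont: "continuous_on UNIV (pp d)" "continuous_on UNIV (pp1 d)" "continuous_on UNIV (PP d)"
proof -
  have c: "continuous_on UNIV sS" "continuous_on UNIV sS1" "continuous_on UNIV sA"
    using sS_cont by (auto intro: continuous_at_imp_continuous_on)
  show "continuous_on UNIV (pp d)" unfolding pp_def[abs_def] divide_inverse
    by (rule continuous_on_compose2[OF c(1)]) (auto intro!: continuous_intros)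
  show "continuous_on UNIV (pp1 d)" unfolding pp1_def[abs_def] divide_inverse
    by (intro continuous_intros continuous_on_compose2[OF c(2)]) auto
  show "continuous_on UNIV (PP d)" unfolding PP_def[abs_def] divide_inverse
    by (intro continuous_intros continuous_on_compose2[OF c(3)]) auto
qed

lemma line_eventually:
  fixes x i :: "'a::real_normed_vector"
  assumes "eventually P (nhds x)"
  shows "eventually (\<lambda>h. P (x + h *\<^sub>R i)) (nhds 0)"
proof -
  have "filterlim (\<lambda>h::real. x + h *\<^sub>R i) (nhds x) (nhds 0)"
    by (auto intro!: tendsto_eq_intros filterlim_ident)
  then show ?thesis using assms by (simp add: filterlim_iff)
qed

lemma cont_loc:
  fixes f :: "'a::t2_space \<Rightarrow> real"
  assumes "\<And>x. x \<notin> C \<Longrightarrow> eventually (\<lambda>y. f y = 0) (nhds x)"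
    and "\<And>x. x \<in> C \<Longrightarrow> isCont f x"
  shows "continuous_on UNIV f"
proof (rule continuous_at_imp_continuous_on, clarify)
  fix x show "isCont f x"
  proof (cases "x \<in> C")
    case False
    have "f x = 0" using eventually_nhds_x_imp_x[OF assms(1)[OF False]] .
    have "isCont f x \<longleftrightarrow> isCont (\<lambda>y. 0::real) x"
      by (rule isCont_cong) (use assms(1)[OF False] in simp)
    then show ?thesis by simp
  qed (use assms in auto)
qed

context
  fixes Om :: "'a::euclidean_space set" and T :: real and u :: "'a \<Rightarrow> real \<Rightarrow> real" and \<delta> :: real
  assumes Om: "open Om" "bounded Om" and T: "T > 0" and C: "C21_l0 Om T u" and \<delta>: "\<delta> > 0"
begin

lemma dir_part:
  assumes i: "i \<in> Basis" and t: "t \<in> {0<..<T}"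
  shows "integrable lborel (\<lambda>x. indicator Om x * (pp \<delta> (u x t) * dx i (dx i u) x t))"
    and "integral\<^sup>L lborel (\<lambda>x. indicator Om x * (pp \<delta> (u x t) * dx i (dx i u) x t)) \<le> 0"
proof -
  have C21: "C21 Om T u" and fr: "\<And>x t. x \<in> frontier Om \<Longrightarrow> t \<in> {0..T} \<Longrightarrow> u x t = 0"
    using C unfolding C21_l0_def by auto
  define d1 where "d1 x = dx i u x t" for x
  define d2 where "d2 x = dx i (dx i u) x t" for x
  have t': "t \<in> {0..T}" using t by auto
  have uc: "continuous_on (closure Om) (\<lambda>x. u x t)" by (rule C21_u_cont(1)[OF C21 t'])
  have uOm: "continuous_on Om (\<lambda>x. u x t)" by (rule continuous_on_subset[OF uc closure_subset])
  have E1: "ext_cont Om T (dx i u)" and E2: "ext_cont Om T (dx i (dx i u))"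
    using C21 i unfolding C21_def by auto
  have d1c: "continuous_on Om d1" unfolding d1_def by (rule ext_cont_props(3)[OF Om E1 t])
  have d2c: "continuous_on Om d2" unfolding d2_def by (rule ext_cont_props(3)[OF Om E2 t])
  obtain B1 where B1: "\<And>x. x \<in> Om \<Longrightarrow> \<bar>d1 x\<bar> \<le> B1"
    using ext_cont_props(2)[OF Om E1] t unfolding d1_def by blast
  obtain B2 where B2: "\<And>x. x \<in> Om \<Longrightarrow> \<bar>d2 x\<bar> \<le> B2"
    using ext_cont_props(2)[OF Om E2] t unfolding d2_def by blast
  define Ct where "Ct = closure Om \<inter> (\<lambda>x. u x t) -` {\<delta>..}"
  have Ctc: "compact Ct"
  proof -
    have "closed Ct" unfolding Ct_def by (rule continuous_closed_preimage[OF uc]) auto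
    moreover have "bounded Ct" unfolding Ct_def using Om(2) bounded_closure bounded_subset by blast
    ultimately show ?thesis by (simp add: compact_eq_bounded_closed)
  qed
  have CtOm: "Ct \<subseteq> Om"
  proof
    fix x assume x: "x \<in> Ct"
    show "x \<in> Om"
    proof (rule ccontr)
      assume "x \<notin> Om"
      then have "x \<in> frontier Om" using x Om(1) unfolding Ct_def frontier_def by (auto simp: interior_open)
      then have "u x t = 0" using fr t' by blast
      then show False using x \<delta> unfolding Ct_def by auto
    qed
  qed
  define G where "G x = indicator Om x * (pp \<delta> (u x t) * d1 x)" for x
  define g where "g x = indicator Om x * (pp1 \<delta> (u x t) * d1 x * d1 x + pp \<delta> (u x t) * d2 x)" for x
  have van: "eventually (\<lambda>y. G y = 0 \<and> g y = 0) (nhds x)" if x: "x \<notin> Ct" for x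
  proof (cases "x \<in> closure Om")
    case True
    then have ux: "u x t < \<delta>" using x unfolding Ct_def by auto
    obtain e where e: "e > 0" "\<And>y. y \<in> closure Om \<Longrightarrow> dist y x < e \<Longrightarrow> dist (u y t) (u x t) < \<delta> - u x t"
      using uc True ux unfolding continuous_on_iff by (metis diff_gt_0_iff_gt)
    have "\<forall>y. dist y x < e \<longrightarrow> G y = 0 \<and> g y = 0"
    proof (intro allI impI)
      fix y assume "dist y x < e"
      show "G y = 0 \<and> g y = 0"
      proof (cases "y \<in> Om")
        case True
        then have "dist (u y t) (u x t) < \<delta> - u x t" using e \<open>dist y x < e\<close> closure_subset by blast
        then have "u y t \<le> \<delta>" by (auto simp: dist_real_def)
        then show ?thesis using pp_props[OF \<delta>] by (simp add: G_def g_def)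
      qed (simp add: G_def g_def)
    qed
    then show ?thesis unfolding eventually_nhds_metric using e(1) by blast
  next
    case False
    have "eventually (\<lambda>y. y \<in> - closure Om) (nhds x)" by (rule eventually_nhds_in_open) (use False in auto)
    moreover have "\<And>y. y \<notin> closure Om \<Longrightarrow> y \<notin> Om" using closure_subset by blast
    ultimately show ?thesis
      by (auto simp: G_def g_def elim!: eventually_mono)
  qed
  have Om_ev: "eventually (\<lambda>y. y \<in> Om) (nhds x)" if "x \<in> Om" for x
    by (rule eventually_nhds_in_open) (use Om that in auto)
  have ppc: "continuous_on UNIV (pp \<delta>)" "continuous_on UNIV (pp1 \<delta>)" by (rule pp_cont)+
  have ppu: "continuous_on Om (\<lambda>x. pp \<delta> (u x t))" "continuous_on Om (\<lambda>x. pp1 \<delta> (u x t))"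
    by (rule continuous_on_compose2[OF ppc(1) uOm], simp, rule continuous_on_compose2[OF ppc(2) uOm], simp)
  have Gc: "continuous_on UNIV G"
  proof (rule cont_loc[of Ct])
    show "eventually (\<lambda>y. G y = 0) (nhds x)" if "x \<notin> Ct" for x using van[OF that] by (rule eventually_mono) simp
    show "isCont G x" if "x \<in> Ct" for x
    proof -
      have xO: "x \<in> Om" using that CtOm by auto
      have "continuous_on Om (\<lambda>x. pp \<delta> (u x t) * d1 x)" by (intro continuous_intros ppu d1c)
      then have "isCont (\<lambda>x. pp \<delta> (u x t) * d1 x) x" using continuous_on_eq_continuous_at Om(1) xO by blast
      moreover have "isCont G x \<longleftrightarrow> isCont (\<lambda>x. pp \<delta> (u x t) * d1 x) x"
        by (rule isCont_cong) (use Om_ev[OF xO] in \<open>auto simp: G_def elim!: eventually_mono\<close>)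
      ultimately show ?thesis by simp
    qed
  qed
  have gc: "continuous_on UNIV g"
  proof (rule cont_loc[of Ct])
    show "eventually (\<lambda>y. g y = 0) (nhds x)" if "x \<notin> Ct" for x using van[OF that] by (rule eventually_mono) simp
    show "isCont g x" if "x \<in> Ct" for x
    proof -
      have xO: "x \<in> Om" using that CtOm by auto
      have "continuous_on Om (\<lambda>x. pp1 \<delta> (u x t) * d1 x * d1 x + pp \<delta> (u x t) * d2 x)"
        by (intro continuous_intros ppu d1c d2c)
      then have "isCont (\<lambda>x. pp1 \<delta> (u x t) * d1 x * d1 x + pp \<delta> (u x t) * d2 x) x"
        using continuous_on_eq_continuous_at Om(1) xO by blast
      moreover have "isCont g x \<longleftrightarrow> isCont (\<lambda>x. pp1 \<delta> (u x t) * d1 x * d1 x + pp \<delta> (u x t) * d2 x) x"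
        by (rule isCont_cong) (use Om_ev[OF xO] in \<open>auto simp: g_def elim!: eventually_mono\<close>)
      ultimately show ?thesis by simp
    qed
  qed
  have D: "DERIV (\<lambda>h. G (x + h *\<^sub>R i)) 0 :> g x" for x
  proof (cases "x \<in> Ct")
    case False
    have ev: "eventually (\<lambda>h. G (x + h *\<^sub>R i) = 0) (nhds 0)"
      using line_eventually[OF van[OF False], of i] by (rule eventually_mono) simp
    have gx: "g x = 0" using eventually_nhds_x_imp_x[OF van[OF False]] by simp
    have "DERIV (\<lambda>h. G (x + h *\<^sub>R i)) 0 :> 0 \<longleftrightarrow> DERIV (\<lambda>h::real. 0::real) 0 :> 0"
      by (rule DERIV_cong_ev) (use ev in auto)
    then show ?thesis using gx by simp
  next
    case True
    have xO: "x \<in> Om" using True CtOm by auto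
    have ev: "eventually (\<lambda>h. x + h *\<^sub>R i \<in> Om) (nhds 0)"
      using line_eventually[OF Om_ev[OF xO], of i] .
    have du: "DERIV (\<lambda>h. u (x + h *\<^sub>R i) t) 0 :> d1 x" unfolding d1_def by (rule C21_derivs(2)[OF C21 xO t i])
    have dd: "DERIV (\<lambda>h. d1 (x + h *\<^sub>R i)) 0 :> d2 x" unfolding d1_def d2_def by (rule C21_derivs(3)[OF C21 xO t i i])
    have dp: "DERIV (\<lambda>h. pp \<delta> (u (x + h *\<^sub>R i) t)) 0 :> pp1 \<delta> (u x t) * d1 x"
      using DERIV_chain2[OF pp_deriv du, of \<delta>] \<delta> by simp
    have dprod: "DERIV (\<lambda>h. pp \<delta> (u (x + h *\<^sub>R i) t) * d1 (x + h *\<^sub>R i)) 0 :> g x"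
      using DERIV_mult[OF dp dd] xO by (simp add: g_def algebra_simps)
    show ?thesis
      by (rule DERIV_cong_ev[THEN iffD1, OF refl _ refl dprod]) (use ev in \<open>auto simp: G_def elim!: eventually_mono\<close>)
  qed
  have gint0: "integral\<^sup>L lborel g = 0"
  proof (rule deriv_integral_zero[OF Ctc _ _ D gc Gc])
    show "G x = 0" if "x \<notin> Ct" for x using eventually_nhds_x_imp_x[OF van[OF that]] by simp
    show "g x = 0" if "x \<notin> Ct" for x using eventually_nhds_x_imp_x[OF van[OF that]] by simp
  qed
  have i1: "integrable lborel (\<lambda>x. indicator Om x * (pp1 \<delta> (u x t) * d1 x * d1 x))"
  proof (rule integrable_bdd_open[OF Om])
    show "continuous_on Om (\<lambda>x. pp1 \<delta> (u x t) * d1 x * d1 x)" by (intro continuous_intros ppu d1c)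
    show "\<bar>pp1 \<delta> (u x t) * d1 x * d1 x\<bar> \<le> 30 / \<delta> * B1 * B1" if "x \<in> Om" for x
    proof -
      have "\<bar>pp1 \<delta> (u x t) * d1 x * d1 x\<bar> = \<bar>pp1 \<delta> (u x t)\<bar> * \<bar>d1 x\<bar> * \<bar>d1 x\<bar>" by (simp add: abs_mult)
      also have "\<dots> \<le> 30 / \<delta> * B1 * B1"
        using pp_props(3,4,5,6)[OF \<delta>, of "u x t"] B1[OF that] \<delta> abs_ge_zero[of "d1 x"]
        by (intro mult_mono) (auto simp del: abs_ge_zero)
      finally show ?thesis .
    qed
  qed
  have i2: "integrable lborel (\<lambda>x. indicator Om x * (pp \<delta> (u x t) * d2 x))"
  proof (rule integrable_bdd_open[OF Om])
    show "continuous_on Om (\<lambda>x. pp \<delta> (u x t) * d2 x)" by (intro continuous_intros ppu d2c)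
    show "\<bar>pp \<delta> (u x t) * d2 x\<bar> \<le> 1 * B2" if "x \<in> Om" for x
      unfolding abs_mult using pp_props(3,4,5,6)[OF \<delta>, of "u x t"] B2[OF that] by (intro mult_mono) auto
  qed
  then show "integrable lborel (\<lambda>x. indicator Om x * (pp \<delta> (u x t) * dx i (dx i u) x t))"
    by (simp add: d2_def)
  have "integral\<^sup>L lborel g = integral\<^sup>L lborel (\<lambda>x. indicator Om x * (pp1 \<delta> (u x t) * d1 x * d1 x))
      + integral\<^sup>L lborel (\<lambda>x. indicator Om x * (pp \<delta> (u x t) * d2 x))"
    unfolding g_def distrib_left by (rule Bochner_Integration.integral_add[OF i1 i2])
  moreover have "0 \<le> integral\<^sup>L lborel (\<lambda>x. indicator Om x * (pp1 \<delta> (u x t) * d1 x * d1 x))"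
    by (rule integral_nonneg_AE, rule AE_I2)
       (use pp_props(5)[OF \<delta>] in \<open>auto simp: mult.assoc intro!: mult_nonneg_nonneg\<close>)
  ultimately show "integral\<^sup>L lborel (\<lambda>x. indicator Om x * (pp \<delta> (u x t) * dx i (dx i u) x t)) \<le> 0"
    using gint0 by (simp add: d2_def)
qed

end

context
  fixes Om :: "'a::euclidean_space set" and T :: real and u :: "'a \<Rightarrow> real \<Rightarrow> real" and \<delta> :: real
  assumes Om: "open Om" "bounded Om" and T: "T > 0" and C: "C21_l0 Om T u" and \<delta>: "\<delta> > 0"
begin

lemma C21': "C21 Om T u" using C unfolding C21_l0_def by auto

lemma lap_eq: "laplacian u x t = (\<Sum>i\<in>Basis. dx i (dx i u) x t)"
  by (simp add: laplacian_def)

lemma space_part: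
  assumes t: "t \<in> {0<..<T}"
  shows "integrable lborel (\<lambda>x. indicator Om x * (pp \<delta> (u x t) * laplacian u x t))"
    and "integral\<^sup>L lborel (\<lambda>x. indicator Om x * (pp \<delta> (u x t) * laplacian u x t)) \<le> 0"
proof -
  have eq: "(\<lambda>x. indicator Om x * (pp \<delta> (u x t) * laplacian u x t)) =
     (\<lambda>x. \<Sum>i\<in>Basis. indicator Om x * (pp \<delta> (u x t) * dx i (dx i u) x t))"
    by (simp add: lap_eq sum_distrib_left)
  have ii: "\<And>i. i \<in> Basis \<Longrightarrow> integrable lborel (\<lambda>x. indicator Om x * (pp \<delta> (u x t) * dx i (dx i u) x t))"
    using dir_part(1)[OF Om T C \<delta> _ t] by blast
  show "integrable lborel (\<lambda>x. indicator Om x * (pp \<delta> (u x t) * laplacian u x t))"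
    unfolding eq by (rule Bochner_Integration.integrable_sum) (use ii in auto)
  have "integral\<^sup>L lborel (\<lambda>x. indicator Om x * (pp \<delta> (u x t) * laplacian u x t)) =
     (\<Sum>i\<in>Basis. integral\<^sup>L lborel (\<lambda>x. indicator Om x * (pp \<delta> (u x t) * dx i (dx i u) x t)))"
    unfolding eq by (rule Bochner_Integration.integral_sum) (use ii in auto)
  also have "\<dots> \<le> 0"
    by (rule sum_nonpos) (use dir_part(2)[OF Om T C \<delta> _ t] in blast)
  finally show "integral\<^sup>L lborel (\<lambda>x. indicator Om x * (pp \<delta> (u x t) * laplacian u x t)) \<le> 0" .
qed

lemma time_part:
  assumes x: "x \<in> Om"
  shows "integral\<^sup>L lborel (\<lambda>t. indicator {0<..<T} t * (pp \<delta> (u x t) * dt u x t)) = - PP \<delta> (u x 0)"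
proof -
  have xc: "x \<in> closure Om" using x closure_subset by auto
  have uT: "u x T = 0" using C xc unfolding C21_l0_def by auto
  have Et: "ext_cont Om T (dt u)" using C21' unfolding C21_def by auto
  obtain Bt where Bt: "\<And>t. t \<in> {0<..<T} \<Longrightarrow> \<bar>dt u x t\<bar> \<le> Bt"
    using ext_cont_props(2)[OF Om Et] x by blast
  have ucT: "continuous_on {0..T} (\<lambda>s. u x s)" by (rule C21_u_cont(2)[OF C21' xc])
  have "integral\<^sup>L lborel (\<lambda>t. indicator {0<..<T} t * (pp \<delta> (u x t) * dt u x t)) = PP \<delta> (u x T) - PP \<delta> (u x 0)"
  proof (rule FTC_open[OF T])
    show "continuous_on {0..T} (\<lambda>s. PP \<delta> (u x s))"
      by (rule continuous_on_compose2[OF pp_cont(3) ucT]) auto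
    show "DERIV (\<lambda>s. PP \<delta> (u x s)) t :> pp \<delta> (u x t) * dt u x t" if "t \<in> {0<..<T}" for t
      using DERIV_chain2[OF PP_deriv C21_derivs(1)[OF C21' x that], of \<delta>] \<delta> by simp
    have "continuous_on {0<..<T} (\<lambda>s. pp \<delta> (u x s))"
      by (rule continuous_on_compose2[OF pp_cont(1) continuous_on_subset[OF ucT]]) auto
    then show "continuous_on {0<..<T} (\<lambda>s. pp \<delta> (u x s) * dt u x s)"
      by (intro continuous_intros ext_cont_props(4)[OF Om Et x])
    show "\<bar>pp \<delta> (u x t) * dt u x t\<bar> \<le> 1 * Bt" if "t \<in> {0<..<T}" for t
      unfolding abs_mult using pp_props(3,4)[OF \<delta>, of "u x t"] Bt[OF that] by (intro mult_mono) auto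
  qed
  then show ?thesis using uT pp_props(8)[OF \<delta>] by simp
qed

lemma assemble:
  shows "integrable lborel (\<lambda>p. indicator (Om \<times> {0<..<T}) p * \<bar>dt u (fst p) (snd p) + laplacian u (fst p) (snd p)\<bar>)"
    and "integral\<^sup>L lborel (\<lambda>x. indicator Om x * PP \<delta> (u x 0)) \<le>
      integral\<^sup>L lborel (\<lambda>p. indicator (Om \<times> {0<..<T}) p * \<bar>dt u (fst p) (snd p) + laplacian u (fst p) (snd p)\<bar>)"
proof -
  define Q where "Q = Om \<times> {0<..<T}"
  have Qo: "open Q" unfolding Q_def using Om by (auto intro: open_Times)
  have Qb: "bounded Q" unfolding Q_def using Om by (auto intro: bounded_Times)
  have Et: "ext_cont Om T (dt u)" using C21' unfolding C21_def by auto
  have Ei: "\<And>i. i \<in> Basis \<Longrightarrow> ext_cont Om T (dx i (dx i u))" using C21' unfolding C21_def by auto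
  obtain Bt where Bt: "\<And>x t. x \<in> Om \<Longrightarrow> t \<in> {0<..<T} \<Longrightarrow> \<bar>dt u x t\<bar> \<le> Bt"
    using ext_cont_props(2)[OF Om Et] by blast
  have "\<forall>i\<in>Basis. \<exists>B. \<forall>x\<in>Om. \<forall>t\<in>{0<..<T}. \<bar>dx i (dx i u) x t\<bar> \<le> B"
    using ext_cont_props(2)[OF Om Ei] by blast
  then obtain Bf where Bf: "\<And>i x t. i \<in> Basis \<Longrightarrow> x \<in> Om \<Longrightarrow> t \<in> {0<..<T} \<Longrightarrow> \<bar>dx i (dx i u) x t\<bar> \<le> Bf i"
    by metis
  have Bl: "\<bar>laplacian u x t\<bar> \<le> (\<Sum>i\<in>Basis. Bf i)" if "x \<in> Om" "t \<in> {0<..<T}" for x t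
  proof -
    have "\<bar>laplacian u x t\<bar> \<le> (\<Sum>i\<in>Basis. \<bar>dx i (dx i u) x t\<bar>)" unfolding lap_eq by (rule sum_abs)
    also have "\<dots> \<le> (\<Sum>i\<in>Basis. Bf i)" by (rule sum_mono) (use Bf that in auto)
    finally show ?thesis .
  qed
  have dtc: "continuous_on Q (\<lambda>p. dt u (fst p) (snd p))"
    using ext_cont_props(1)[OF Om Et] unfolding Q_def by (simp add: case_prod_beta)
  have ddc: "continuous_on Q (\<lambda>p. dx i (dx i u) (fst p) (snd p))" if "i \<in> Basis" for i
    using ext_cont_props(1)[OF Om Ei[OF that]] unfolding Q_def by (simp add: case_prod_beta)
  have lapc: "continuous_on Q (\<lambda>p. laplacian u (fst p) (snd p))"
    unfolding lap_eq by (intro continuous_on_sum ddc)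
  have uc: "continuous_on Q (\<lambda>p. u (fst p) (snd p))"
  proof -
    have "continuous_on (closure Om \<times> {0..T}) (\<lambda>(x, t). u x t)" using C21' unfolding C21_def by blast
    moreover have "Q \<subseteq> closure Om \<times> {0..T}" using closure_subset by (auto simp: Q_def)
    ultimately have "continuous_on Q (\<lambda>(x, t). u x t)" by (rule continuous_on_subset)
    then show ?thesis by (simp add: case_prod_beta)
  qed
  have ppc: "continuous_on Q (\<lambda>p. pp \<delta> (u (fst p) (snd p)))"
    by (rule continuous_on_compose2[OF pp_cont(1) uc]) auto
  define fA where "fA = (\<lambda>(x, t). indicator Q (x, t) * (pp \<delta> (u x t) * dt u x t))"
  define fB where "fB = (\<lambda>(x, t). indicator Q (x, t) * (pp \<delta> (u x t) * laplacian u x t))"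
  define fF where "fF = (\<lambda>p. indicator Q p * \<bar>dt u (fst p) (snd p) + laplacian u (fst p) (snd p)\<bar>)"
  have QD: "p \<in> Q \<Longrightarrow> fst p \<in> Om \<and> snd p \<in> {0<..<T}" for p unfolding Q_def by auto
  have iA: "integrable lborel fA"
  proof -
    have "integrable lborel (\<lambda>p. indicator Q p * (pp \<delta> (u (fst p) (snd p)) * dt u (fst p) (snd p)))"
    proof (rule integrable_bdd_open[OF Qo Qb])
      show "continuous_on Q (\<lambda>p. pp \<delta> (u (fst p) (snd p)) * dt u (fst p) (snd p))" by (intro continuous_intros ppc dtc)
      show "\<bar>pp \<delta> (u (fst p) (snd p)) * dt u (fst p) (snd p)\<bar> \<le> 1 * Bt" if "p \<in> Q" for p
        unfolding abs_mult using pp_props(3,4)[OF \<delta>, of "u (fst p) (snd p)"] Bt QD[OF that] by (intro mult_mono) auto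
    qed
    then show ?thesis by (simp add: fA_def case_prod_unfold)
  qed
  have iB: "integrable lborel fB"
  proof -
    have "integrable lborel (\<lambda>p. indicator Q p * (pp \<delta> (u (fst p) (snd p)) * laplacian u (fst p) (snd p)))"
    proof (rule integrable_bdd_open[OF Qo Qb])
      show "continuous_on Q (\<lambda>p. pp \<delta> (u (fst p) (snd p)) * laplacian u (fst p) (snd p))" by (intro continuous_intros ppc lapc)
      show "\<bar>pp \<delta> (u (fst p) (snd p)) * laplacian u (fst p) (snd p)\<bar> \<le> 1 * (\<Sum>i\<in>Basis. Bf i)" if "p \<in> Q" for p
        unfolding abs_mult using pp_props(3,4)[OF \<delta>, of "u (fst p) (snd p)"] Bl QD[OF that] by (intro mult_mono) auto
    qed
    then show ?thesis by (simp add: fB_def case_prod_unfold)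
  qed
  have iF: "integrable lborel fF"
    unfolding fF_def
  proof (rule integrable_bdd_open[OF Qo Qb])
    show "continuous_on Q (\<lambda>p. \<bar>dt u (fst p) (snd p) + laplacian u (fst p) (snd p)\<bar>)" by (intro continuous_intros dtc lapc)
    show "\<bar>\<bar>dt u (fst p) (snd p) + laplacian u (fst p) (snd p)\<bar>\<bar> \<le> Bt + (\<Sum>i\<in>Basis. Bf i)" if "p \<in> Q" for p
      using Bt[of "fst p" "snd p"] Bl[of "fst p" "snd p"] QD[OF that] by auto
  qed
  then show "integrable lborel (\<lambda>p. indicator (Om \<times> {0<..<T}) p * \<bar>dt u (fst p) (snd p) + laplacian u (fst p) (snd p)\<bar>)"
    by (simp add: fF_def Q_def)
  have intA: "integral\<^sup>L lborel fA = - integral\<^sup>L lborel (\<lambda>x. indicator Om x * PP \<delta> (u x 0))"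
  proof -
    have "integral\<^sup>L lborel fA = (\<integral>x. (\<integral>t. fA (x, t) \<partial>lborel) \<partial>lborel)"
      using lborel_pair.integral_fst'[of fA] iA by (simp add: lborel_prod)
    also have "\<dots> = (\<integral>x. - (indicator Om x * PP \<delta> (u x 0)) \<partial>lborel)"
    proof (rule Bochner_Integration.integral_cong[OF refl])
      fix x :: 'a
      show "(\<integral>t. fA (x, t) \<partial>lborel) = - (indicator Om x * PP \<delta> (u x 0))"
      proof (cases "x \<in> Om")
        case True
        have "(\<lambda>t. fA (x, t)) = (\<lambda>t. indicator {0<..<T} t * (pp \<delta> (u x t) * dt u x t))"
          using True by (auto simp: fA_def Q_def indicator_def fun_eq_iff)
        then show ?thesis using time_part[OF True] True by simp
      next
        case False
        then show ?thesis by (simp add: fA_def Q_def indicator_def)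
      qed
    qed
    also have "\<dots> = - integral\<^sup>L lborel (\<lambda>x. indicator Om x * PP \<delta> (u x 0))" by simp
    finally show ?thesis .
  qed
  have intB: "integral\<^sup>L lborel fB \<le> 0"
  proof -
    define fB' where "fB' x t = indicator Q (x, t) * (pp \<delta> (u x t) * laplacian u x t)" for x t
    have eqB: "fB = case_prod fB'" by (simp add: fB_def fB'_def fun_eq_iff)
    have "integral\<^sup>L lborel fB = (\<integral>t. (\<integral>x. fB' x t \<partial>lborel) \<partial>lborel)"
      using lborel_pair.integral_snd[of fB'] iB by (simp add: lborel_prod eqB)
    also have "\<dots> \<le> 0"
    proof -
      have "0 \<le> (\<integral>t. - (\<integral>x. fB' x t \<partial>lborel) \<partial>lborel)"
      proof (rule integral_nonneg_AE, rule AE_I2)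
        fix t :: real
        show "0 \<le> - (\<integral>x. fB' x t \<partial>lborel)"
        proof (cases "t \<in> {0<..<T}")
          case True
          have "(\<lambda>x. fB' x t) = (\<lambda>x. indicator Om x * (pp \<delta> (u x t) * laplacian u x t))"
            using True by (auto simp: fB'_def Q_def indicator_def fun_eq_iff)
          then show ?thesis using space_part(2)[OF True] by simp
        next
          case False
          then have "(\<lambda>x. fB' x t) = (\<lambda>x. 0)" by (auto simp: fB'_def Q_def indicator_def fun_eq_iff)
          then show ?thesis by simp
        qed
      qed
      then show ?thesis by simp
    qed
    finally show ?thesis .
  qed
  have "integral\<^sup>L lborel (\<lambda>p. - (fA p + fB p)) \<le> integral\<^sup>L lborel fF"
  proof (rule integral_mono)
    show "integrable lborel (\<lambda>p. - (fA p + fB p))" using iA iB by simp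
    show "integrable lborel fF" by (rule iF)
    fix p :: "'a \<times> real"
    obtain x t where p: "p = (x, t)" by (cases p)
    have "- (pp \<delta> (u x t) * dt u x t + pp \<delta> (u x t) * laplacian u x t) \<le> \<bar>dt u x t + laplacian u x t\<bar>"
    proof -
      have "- (pp \<delta> (u x t) * dt u x t + pp \<delta> (u x t) * laplacian u x t) = - (pp \<delta> (u x t) * (dt u x t + laplacian u x t))"
        by (simp add: algebra_simps)
      also have "\<dots> \<le> \<bar>pp \<delta> (u x t) * (dt u x t + laplacian u x t)\<bar>" by simp
      also have "\<dots> \<le> 1 * \<bar>dt u x t + laplacian u x t\<bar>"
        unfolding abs_mult using pp_props(3,4)[OF \<delta>, of "u x t"] by (intro mult_right_mono) auto
      finally show ?thesis by simp
    qed
    then show "- (fA p + fB p) \<le> fF p"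
      by (auto simp: fA_def fB_def fF_def p indicator_def)
  qed
  moreover have "integral\<^sup>L lborel (\<lambda>p. - (fA p + fB p)) = - (integral\<^sup>L lborel fA + integral\<^sup>L lborel fB)"
    using iA iB by simp
  ultimately show "integral\<^sup>L lborel (\<lambda>x. indicator Om x * PP \<delta> (u x 0)) \<le>
      integral\<^sup>L lborel (\<lambda>p. indicator (Om \<times> {0<..<T}) p * \<bar>dt u (fst p) (snd p) + laplacian u (fst p) (snd p)\<bar>)"
    using intA intB by (simp add: fF_def Q_def)
qed

end

lemma lower_bound:
  fixes Om :: "'a::euclidean_space set" and K U :: "'a set"
  assumes Om: "open Om" "bounded Om" and T: "T > 0" and K: "compact K" "K \<subseteq> Om"
    and C: "C21_l0 Om T u" and U: "open U" "K \<subseteq> U" "\<forall>x\<in>U. u x 0 \<ge> 1"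
  shows "emeasure lborel K \<le> (\<integral>\<^sup>+ p. indicator (Om \<times> {0<..<T}) p *
              ennreal \<bar>dt u (fst p) (snd p) + laplacian u (fst p) (snd p)\<bar> \<partial>lborel)"
proof -
  define I where "I = integral\<^sup>L lborel (\<lambda>p. indicator (Om \<times> {0<..<T}) p * \<bar>dt u (fst p) (snd p) + laplacian u (fst p) (snd p)\<bar>)"
  have C21: "C21 Om T u" using C unfolding C21_l0_def by auto
  have u0c: "continuous_on (closure Om) (\<lambda>x. u x 0)" using C21_u_cont(1)[OF C21] T by auto
  have Kfin: "emeasure lborel K < \<infinity>" using K(1) by (rule emeasure_compact_finite)
  have Kint: "integrable lborel (indicator K :: 'a \<Rightarrow> real)"
    using K(1) Kfin by (intro integrable_real_indicator) (auto intro: borel_compact)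
  have key: "(1 - 3 * \<delta> / 2) * measure lborel K \<le> I" if d: "0 < \<delta>" "\<delta> \<le> 1/2" for \<delta>
  proof -
    have PPc: "continuous_on (closure Om) (\<lambda>x. PP \<delta> (u x 0))"
      by (rule continuous_on_compose2[OF pp_cont(3) u0c]) auto
    obtain B where B: "\<And>x. x \<in> closure Om \<Longrightarrow> \<bar>PP \<delta> (u x 0)\<bar> \<le> B"
      using bounded_on_compact[OF _ PPc] Om(2) compact_closure by blast
    have iP: "integrable lborel (\<lambda>x. indicator Om x * PP \<delta> (u x 0))"
      by (rule integrable_bdd_open[OF Om continuous_on_subset[OF PPc closure_subset]]) (use B closure_subset in blast)
    have "(1 - 3 * \<delta> / 2) * measure lborel K = integral\<^sup>L lborel (\<lambda>x. (1 - 3 * \<delta> / 2) * indicator K x)"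
      by simp
    also have "\<dots> \<le> integral\<^sup>L lborel (\<lambda>x. indicator Om x * PP \<delta> (u x 0))"
    proof (rule integral_mono)
      show "integrable lborel (\<lambda>x. (1 - 3 * \<delta> / 2) * indicator K x)" using Kint by simp
      show "integrable lborel (\<lambda>x. indicator Om x * PP \<delta> (u x 0))" by (rule iP)
      fix x
      show "(1 - 3 * \<delta> / 2) * indicator K x \<le> indicator Om x * PP \<delta> (u x 0)"
      proof (cases "x \<in> K")
        case True
        then have "x \<in> Om" "u x 0 \<ge> 1" using K U by auto
        moreover have "PP \<delta> (u x 0) = u x 0 - 3 * \<delta> / 2" using \<open>u x 0 \<ge> 1\<close> d by (intro pp_props(9)) auto
        ultimately show ?thesis using True by (simp add: indicator_def)
      next
        case False
        then show ?thesis using pp_props(7)[OF d(1)] by (simp add: indicator_def)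
      qed
    qed
    also have "\<dots> \<le> I" unfolding I_def by (rule assemble(2)[OF Om T C d(1)])
    finally show ?thesis .
  qed
  have mK: "measure lborel K \<le> I"
  proof (rule ccontr)
    assume "\<not> measure lborel K \<le> I"
    then have lt: "I < measure lborel K" by simp
    have I0: "0 \<le> I" unfolding I_def by (rule integral_nonneg_AE) auto
    define m where "m = measure lborel K"
    have m0: "m > 0" using lt I0 by (simp add: m_def)
    define \<delta> where "\<delta> = min (1/2) ((m - I) / (3 * m))"
    have d: "0 < \<delta>" "\<delta> \<le> 1/2" using lt m0 by (auto simp: \<delta>_def m_def)
    have "(1 - 3 * \<delta> / 2) * m \<le> I" using key[OF d] by (simp add: m_def)
    moreover have "3 * \<delta> / 2 * m \<le> (m - I) / 2"
    proof -
      have "\<delta> \<le> (m - I) / (3 * m)" by (simp add: \<delta>_def)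
      then have "\<delta> * (3 * m) \<le> m - I" using m0 by (simp add: field_simps)
      then show ?thesis by (simp add: field_simps)
    qed
    ultimately show False using lt by (simp add: m_def algebra_simps)
  qed
  have iF: "integrable lborel (\<lambda>p. indicator (Om \<times> {0<..<T}) p * \<bar>dt u (fst p) (snd p) + laplacian u (fst p) (snd p)\<bar>)"
    using assemble(1)[OF Om T C, of 1] by simp
  have "(\<integral>\<^sup>+ p. indicator (Om \<times> {0<..<T}) p * ennreal \<bar>dt u (fst p) (snd p) + laplacian u (fst p) (snd p)\<bar> \<partial>lborel)
     = (\<integral>\<^sup>+ p. ennreal (indicator (Om \<times> {0<..<T}) p * \<bar>dt u (fst p) (snd p) + laplacian u (fst p) (snd p)\<bar>) \<partial>lborel)"
    by (rule nn_integral_cong) (simp add: indicator_def)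
  also have "\<dots> = ennreal I" unfolding I_def
    by (rule nn_integral_eq_integral[OF iF]) auto
  finally have eq: "(\<integral>\<^sup>+ p. indicator (Om \<times> {0<..<T}) p * ennreal \<bar>dt u (fst p) (snd p) + laplacian u (fst p) (snd p)\<bar> \<partial>lborel) = ennreal I" .
  have "emeasure lborel K = ennreal (measure lborel K)" using Kfin by (simp add: emeasure_eq_ennreal_measure)
  also have "\<dots> \<le> ennreal I" using mK by (rule ennreal_leI)
  finally show ?thesis using eq by simp
qed

definition iv :: "real \<Rightarrow> real" where "iv r = inverse (3 * r^2)"
definition qf :: "'a::euclidean_space \<Rightarrow> real \<Rightarrow> 'a \<Rightarrow> real" where
  "qf c r y = (4 * r^2 - (y - c) \<bullet> (y - c)) * iv r"
definition Dq :: "'a::euclidean_space \<Rightarrow> real \<Rightarrow> 'a \<Rightarrow> 'a \<Rightarrow> real" where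
  "Dq c r e y = - 2 * ((y - c) \<bullet> e) * iv r"

lemma qf_deriv: "DERIV (\<lambda>h. qf c r (y + h *\<^sub>R e)) 0 :> Dq c r e y"
  unfolding qf_def Dq_def
  by (auto intro!: derivative_eq_intros simp: inner_commute algebra_simps)

lemma Dq_deriv: "DERIV (\<lambda>h. Dq c r e (y + h *\<^sub>R e')) 0 :> - 2 * (e' \<bullet> e) * iv r"
  unfolding Dq_def
  by (auto intro!: derivative_eq_intros simp: inner_commute algebra_simps)

definition "bet c r y = sS (qf c r y)"
definition "Dbet c r e y = sS1 (qf c r y) * Dq c r e y"
definition "D2bet c r e e' y = sS2 (qf c r y) * Dq c r e' y * Dq c r e y + sS1 (qf c r y) * (- 2 * (e' \<bullet> e) * iv r)"

lemma bet_deriv: "DERIV (\<lambda>h. bet c r (y + h *\<^sub>R e)) 0 :> Dbet c r e y"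
  unfolding bet_def Dbet_def using DERIV_chain2[OF sS_deriv qf_deriv] by simp

lemma Dbet_deriv: "DERIV (\<lambda>h. Dbet c r e (y + h *\<^sub>R e')) 0 :> D2bet c r e e' y"
proof -
  have "DERIV (\<lambda>h. sS1 (qf c r (y + h *\<^sub>R e')) * Dq c r e (y + h *\<^sub>R e')) 0 :>
     sS2 (qf c r (y + 0 *\<^sub>R e')) * Dq c r e' y * Dq c r e (y + 0 *\<^sub>R e') + - 2 * (e' \<bullet> e) * iv r * sS1 (qf c r (y + 0 *\<^sub>R e'))"
    by (rule DERIV_mult[OF DERIV_chain2[OF sS1_deriv qf_deriv] Dq_deriv])
  then show ?thesis unfolding Dbet_def D2bet_def by (simp add: algebra_simps)
qed

definition "sig F y = (\<Sum>p\<in>F. bet (fst p) (snd p) y)"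
definition "Dsig F e y = (\<Sum>p\<in>F. Dbet (fst p) (snd p) e y)"
definition "D2sig F e e' y = (\<Sum>p\<in>F. D2bet (fst p) (snd p) e e' y)"

lemma sig_deriv: "DERIV (\<lambda>h. sig F (y + h *\<^sub>R e)) 0 :> Dsig F e y"
  unfolding sig_def Dsig_def by (rule DERIV_sum) (rule bet_deriv)

lemma Dsig_deriv: "DERIV (\<lambda>h. Dsig F e (y + h *\<^sub>R e')) 0 :> D2sig F e e' y"
  unfolding Dsig_def D2sig_def by (rule DERIV_sum) (rule Dbet_deriv)

definition "phi F y = sS (sig F y)"
definition "Dphi F e y = sS1 (sig F y) * Dsig F e y"
definition "D2phi F e e' y = sS2 (sig F y) * Dsig F e' y * Dsig F e y + sS1 (sig F y) * D2sig F e e' y"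

lemma phi_deriv: "DERIV (\<lambda>h. phi F (y + h *\<^sub>R e)) 0 :> Dphi F e y"
  unfolding phi_def Dphi_def using DERIV_chain2[OF sS_deriv sig_deriv] by simp

lemma Dphi_deriv: "DERIV (\<lambda>h. Dphi F e (y + h *\<^sub>R e')) 0 :> D2phi F e e' y"
proof -
  have "DERIV (\<lambda>h. sS1 (sig F (y + h *\<^sub>R e')) * Dsig F e (y + h *\<^sub>R e')) 0 :>
     sS2 (sig F (y + 0 *\<^sub>R e')) * Dsig F e' y * Dsig F e (y + 0 *\<^sub>R e') + D2sig F e e' y * sS1 (sig F (y + 0 *\<^sub>R e'))"
    by (rule DERIV_mult[OF DERIV_chain2[OF sS1_deriv sig_deriv] Dsig_deriv])
  then show ?thesis unfolding Dphi_def D2phi_def by (simp add: algebra_simps)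
qed

lemma cS_UNIV: "continuous_on UNIV sS" "continuous_on UNIV sS1" "continuous_on UNIV sS2"
  using sS_cont sS2_cont by (auto intro: continuous_at_imp_continuous_on)

lemma cS_intros[continuous_intros]:
  "continuous_on S f \<Longrightarrow> continuous_on S (\<lambda>y. sS (f y))"
  "continuous_on S f \<Longrightarrow> continuous_on S (\<lambda>y. sS1 (f y))"
  "continuous_on S f \<Longrightarrow> continuous_on S (\<lambda>y. sS2 (f y))"
  by (rule continuous_on_compose2[OF cS_UNIV(1)], auto)
     (rule continuous_on_compose2[OF cS_UNIV(2)], auto, rule continuous_on_compose2[OF cS_UNIV(3)], auto)

lemma phi_cont: "continuous_on S (phi F)" "continuous_on S (Dphi F e)" "continuous_on S (D2phi F e e')"
  unfolding phi_def[abs_def] Dphi_def[abs_def] D2phi_def[abs_def] sig_def Dsig_def D2sig_def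
    bet_def Dbet_def D2bet_def qf_def Dq_def
  by (intro continuous_intros)+

lemma qf_dist: "qf c r y = (4 * r^2 - (dist y c)^2) * iv r"
  by (simp add: qf_def dist_norm power2_norm_eq_inner)

lemma bet_in: assumes "r > 0" "dist y c < r" shows "bet c r y = 1"
proof -
  have "(dist y c)^2 \<le> r^2" using assms by (intro power_mono) auto
  then have "1 \<le> qf c r y" using assms(1) by (simp add: qf_dist iv_def field_simps)
  then show ?thesis by (simp add: bet_def sS_simps)
qed

lemma bet_out: assumes "r > 0" "dist y c \<ge> 2 * r" shows "bet c r y = 0"
proof -
  have "(2 * r)^2 \<le> (dist y c)^2" using assms by (intro power_mono) auto
  then have "qf c r y \<le> 0" using assms(1) by (simp add: qf_dist iv_def field_simps)
  then show ?thesis by (simp add: bet_def sS_simps)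
qed

lemma bet_bounds: "0 \<le> bet c r y" "bet c r y \<le> 1"
  unfolding bet_def using sS_bounds by auto

lemma sig_nonneg: "0 \<le> sig F y" unfolding sig_def by (rule sum_nonneg) (use bet_bounds in auto)

lemma phi_bounds: "0 \<le> phi F y" "phi F y \<le> 1"
  unfolding phi_def using sS_bounds by auto

lemma phi_in: assumes "finite F" "p \<in> F" "snd p > 0" "dist y (fst p) < snd p" shows "phi F y = 1"
proof -
  have "1 = bet (fst p) (snd p) y" using bet_in[OF assms(3,4)] by simp
  also have "\<dots> \<le> sig F y" unfolding sig_def
    by (rule member_le_sum[OF assms(2)]) (use bet_bounds assms(1) in auto)
  finally show ?thesis by (simp add: phi_def sS_simps)
qed

lemma phi_out: assumes "\<And>p. p \<in> F \<Longrightarrow> snd p > 0 \<and> dist y (fst p) \<ge> 2 * snd p" shows "phi F y = 0"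
proof -
  have "sig F y = 0" unfolding sig_def
  proof (rule sum.neutral, rule ballI)
    fix p assume "p \<in> F" then show "bet (fst p) (snd p) y = 0" using bet_out assms by blast
  qed
  then show ?thesis by (simp add: phi_def sS_simps)
qed

definition "eta \<tau> t = 1 - sS (t * inverse \<tau>)"
definition "Deta \<tau> t = - (sS1 (t * inverse \<tau>) * inverse \<tau>)"

lemma eta_deriv: "DERIV (eta \<tau>) t :> Deta \<tau> t"
  unfolding eta_def[abs_def] Deta_def
  using DERIV_diff[OF DERIV_const DERIV_chain2[OF sS_deriv DERIV_cmult[OF DERIV_ident, of "inverse \<tau>"]]]
  by (simp add: mult.commute)

lemma eta_props: assumes "\<tau> > 0"
  shows "t \<ge> \<tau> \<Longrightarrow> eta \<tau> t = 0" "eta \<tau> 0 = 1" "0 \<le> eta \<tau> t" "eta \<tau> t \<le> 1" "Deta \<tau> t \<le> 0"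
  using assms sS_bounds[of "t * inverse \<tau>"]
  by (auto simp: eta_def Deta_def sS_simps field_simps)

lemma eta_cont: "continuous_on S (eta \<tau>)" "continuous_on S (Deta \<tau>)"
  unfolding eta_def[abs_def] Deta_def[abs_def] by (intro continuous_intros)+

definition "psi F \<tau> x t = phi F x * eta \<tau> t"

lemma dt_psi: "dt (psi F \<tau>) x t = phi F x * Deta \<tau> t"
  unfolding dt_def psi_def by (rule DERIV_imp_deriv) (intro DERIV_cmult eta_deriv)

lemma psi_line: "DERIV (\<lambda>h. psi F \<tau> (x + h *\<^sub>R i) t) 0 :> Dphi F i x * eta \<tau> t"
  unfolding psi_def by (rule DERIV_cmult_right) (rule phi_deriv)

lemma dx_psi: "dx i (psi F \<tau>) = (\<lambda>x t. Dphi F i x * eta \<tau> t)"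
  unfolding dx_def[abs_def] by (intro ext DERIV_imp_deriv psi_line)

lemma dx_psi_line: "DERIV (\<lambda>h. dx i (psi F \<tau>) (x + h *\<^sub>R j) t) 0 :> D2phi F i j x * eta \<tau> t"
  unfolding dx_psi by (rule DERIV_cmult_right) (rule Dphi_deriv)

lemma dxx_psi: "dx j (dx i (psi F \<tau>)) x t = D2phi F i j x * eta \<tau> t"
  unfolding dx_def[of j] by (intro DERIV_imp_deriv dx_psi_line)

lemma lap_psi: "laplacian (psi F \<tau>) x t = eta \<tau> t * (\<Sum>i\<in>Basis. D2phi F i i x)"
  unfolding laplacian_def dxx_psi by (simp add: sum_distrib_left mult.commute)

lemma cont_prod_sep:
  fixes a :: "'x::topological_space \<Rightarrow> real" and b :: "'y::topological_space \<Rightarrow> real"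
  assumes "continuous_on UNIV a" "continuous_on UNIV b"
  shows "continuous_on S (\<lambda>(x, t). a x * b t)"
proof -
  have "continuous_on UNIV (\<lambda>p. a (fst p))" by (rule continuous_on_compose2[OF assms(1)]) (auto intro: continuous_intros)
  moreover have "continuous_on UNIV (\<lambda>p. b (snd p))" by (rule continuous_on_compose2[OF assms(2)]) (auto intro: continuous_intros)
  ultimately have "continuous_on UNIV (\<lambda>p. a (fst p) * b (snd p))" by (rule continuous_on_mult)
  then have "continuous_on S (\<lambda>p. a (fst p) * b (snd p))" by (rule continuous_on_subset) simp
  then show ?thesis by (simp add: case_prod_unfold)
qed

lemma ext_cont_sep:
  assumes "continuous_on UNIV a" "continuous_on UNIV b" "\<And>x t. f x t = a x * b t"
  shows "ext_cont Om T f"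
  unfolding ext_cont_def
  by (intro exI[of _ "\<lambda>(x, t). a x * b t"] conjI cont_prod_sep assms) (simp add: assms)

lemma psi_C21: "C21 Om T (psi F \<tau>)"
  unfolding C21_def
proof (intro conjI ballI)
  show "continuous_on (closure Om \<times> {0..T}) (\<lambda>(x, t). psi F \<tau> x t)"
    unfolding psi_def by (intro cont_prod_sep phi_cont eta_cont)
  fix x t assume "x \<in> Om" "t \<in> {0<..<T}"
  show "\<exists>D. ((\<lambda>s. psi F \<tau> x s) has_real_derivative D) (at t)"
    unfolding psi_def by (rule exI, rule DERIV_cmult[OF eta_deriv])
  show "\<exists>D. ((\<lambda>h. psi F \<tau> (x + h *\<^sub>R i) t) has_real_derivative D) (at 0)" for i
    by (rule exI, rule psi_line)
  show "\<exists>D. ((\<lambda>h. dx i (psi F \<tau>) (x + h *\<^sub>R j) t) has_real_derivative D) (at 0)" for i j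
    by (rule exI, rule dx_psi_line)
next
  show "ext_cont Om T (dt (psi F \<tau>))"
    by (rule ext_cont_sep[OF phi_cont(1) eta_cont(2)]) (rule dt_psi)
  show "ext_cont Om T (dx i (psi F \<tau>))" for i
    by (rule ext_cont_sep[OF phi_cont(2) eta_cont(1)]) (simp add: dx_psi)
  show "ext_cont Om T (dx j (dx i (psi F \<tau>)))" for i j
    by (rule ext_cont_sep[OF phi_cont(3) eta_cont(1)]) (rule dxx_psi)
qed

lemma psi_l0:
  fixes Om :: "'a::euclidean_space set"
  assumes Om: "open Om" and F: "\<And>p. p \<in> F \<Longrightarrow> snd p > 0 \<and> ball (fst p) (2 * snd p) \<subseteq> Om"
    and \<tau>: "0 < \<tau>" "\<tau> \<le> T"
  shows "C21_l0 Om T (psi F \<tau>)"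
  unfolding C21_l0_def
proof (intro conjI ballI psi_C21)
  fix x t assume x: "x \<in> frontier Om"
  then have "x \<notin> Om" using Om by (simp add: frontier_def interior_open)
  then have "phi F x = 0"
    by (intro phi_out) (use F in \<open>force simp: dist_commute\<close>)
  then show "psi F \<tau> x t = 0" by (simp add: psi_def)
next
  fix x show "psi F \<tau> x T = 0" using eta_props(1)[OF \<tau>(1)] \<tau>(2) by (simp add: psi_def)
qed

lemma sep_nn:
  fixes f :: "'a::euclidean_space \<Rightarrow> ennreal" and g :: "real \<Rightarrow> ennreal"
  assumes f: "f \<in> borel_measurable borel" and g: "g \<in> borel_measurable borel"
  shows "(\<integral>\<^sup>+ p. f (fst p) * g (snd p) \<partial>lborel) = (\<integral>\<^sup>+ x. f x \<partial>lborel) * (\<integral>\<^sup>+ t. g t \<partial>lborel)"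
proof -
  have m: "(\<lambda>p. f (fst p) * g (snd p)) \<in> borel_measurable (lborel \<Otimes>\<^sub>M lborel)"
    using f g by measurable
  have "(\<integral>\<^sup>+ p. f (fst p) * g (snd p) \<partial>lborel) = (\<integral>\<^sup>+ p. f (fst p) * g (snd p) \<partial>(lborel \<Otimes>\<^sub>M lborel))"
    by (simp add: lborel_prod)
  also have "\<dots> = (\<integral>\<^sup>+ x. \<integral>\<^sup>+ t. f x * g t \<partial>lborel \<partial>lborel)"
    using lborel.nn_integral_fst[OF m] by simp
  also have "\<dots> = (\<integral>\<^sup>+ x. f x * (\<integral>\<^sup>+ t. g t \<partial>lborel) \<partial>lborel)"
    by (rule nn_integral_cong) (rule nn_integral_cmult, use g in simp)
  also have "\<dots> = (\<integral>\<^sup>+ x. f x \<partial>lborel) * (\<integral>\<^sup>+ t. g t \<partial>lborel)"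
    by (rule nn_integral_multc) (use f in simp)
  finally show ?thesis .
qed

lemma int_Deta:
  assumes \<tau>: "0 < \<tau>" "\<tau> \<le> T"
  shows "(\<integral>\<^sup>+ t. ennreal (indicator {0<..<T} t * - Deta \<tau> t) \<partial>lborel) = 1"
proof -
  have "((\<lambda>t. - Deta \<tau> t) has_integral ((- eta \<tau>) T - (- eta \<tau>) 0)) {0..T}"
  proof (rule fundamental_theorem_of_calculus)
    show "0 \<le> T" using \<tau> by simp
    fix t
    have "DERIV (\<lambda>t. - eta \<tau> t) t :> - Deta \<tau> t" by (intro DERIV_minus eta_deriv)
    then show "((- eta \<tau>) has_vector_derivative - Deta \<tau> t) (at t within {0..T})"
      by (simp add: has_real_derivative_iff_has_vector_derivative[symmetric] has_field_derivative_at_within fun_Compl_def)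
  qed
  then have "((\<lambda>t. - Deta \<tau> t) has_integral 1) {0<..<T}"
    using has_integral_open_interval[of "\<lambda>t. - Deta \<tau> t" _ 0 T] eta_props(1,2)[OF \<tau>(1)] \<tau> by simp
  then have "(\<integral>\<^sup>+ t. ennreal (indicator {0<..<T} t * - Deta \<tau> t) \<partial>lborel) = ennreal 1"
    by (intro nn_integral_has_integral_lebesgue) (use eta_props(5)[OF \<tau>(1)] in auto)
  then show ?thesis by simp
qed

lemma upper_bound:
  fixes Om :: "'a::euclidean_space set"
  assumes Om: "open Om" "bounded Om" and T: "T > 0" and K: "compact K" "K \<subseteq> Om"
  shows "cap Om T K \<le> emeasure lborel K"
proof (rule ennreal_le_epsilon)
  fix \<epsilon> :: real assume "emeasure lborel K < top" and \<epsilon>: "0 < \<epsilon>"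
  have Kb: "K \<in> sets borel" using K(1) by (simp add: borel_compact)
  obtain V0 where V0: "open V0" "K \<subseteq> V0" "emeasure lborel (V0 - K) \<le> ennreal (\<epsilon>/2)"
    using outer_regular_lborel_le[OF Kb, of "\<epsilon>/2"] \<epsilon> by auto
  define V where "V = V0 \<inter> Om"
  have Vo: "open V" using V0(1) Om(1) by (simp add: V_def open_Int)
  have KV: "K \<subseteq> V" using V0(2) K(2) by (auto simp: V_def)
  have VOm: "V \<subseteq> Om" by (auto simp: V_def)
  have Vm: "emeasure lborel V \<le> emeasure lborel K + ennreal (\<epsilon>/2)"
  proof -
    have "emeasure lborel V \<le> emeasure lborel (K \<union> (V0 - K))"
      by (rule emeasure_mono) (use Kb V0(1) in \<open>auto simp: V_def\<close>)
    also have "\<dots> \<le> emeasure lborel K + emeasure lborel (V0 - K)"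
      by (rule emeasure_subadditive) (use Kb V0(1) in auto)
    also have "\<dots> \<le> emeasure lborel K + ennreal (\<epsilon>/2)" using V0(3) by (rule add_left_mono)
    finally show ?thesis .
  qed
  have "\<forall>x\<in>K. \<exists>r>0. ball x (2 * r) \<subseteq> V"
  proof
    fix x assume "x \<in> K"
    then obtain e where "e > 0" "ball x e \<subseteq> V" using Vo KV open_contains_ball by blast
    then show "\<exists>r>0. ball x (2 * r) \<subseteq> V" by (intro exI[of _ "e/2"]) auto
  qed
  then obtain rr where rr: "\<And>x. x \<in> K \<Longrightarrow> rr x > 0 \<and> ball x (2 * rr x) \<subseteq> V" by metis
  have cov: "K \<subseteq> (\<Union>x\<in>K. ball x (rr x))" using rr by force
  obtain K' where K': "K' \<subseteq> K" "finite K'" "K \<subseteq> (\<Union>x\<in>K'. ball x (rr x))"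
    using compactE_image[OF K(1) _ cov] by blast
  define F where "F = (\<lambda>x. (x, rr x)) ` K'"
  have Ffin: "finite F" using K'(2) by (simp add: F_def)
  have FV: "snd p > 0 \<and> ball (fst p) (2 * snd p) \<subseteq> V" if pF: "p \<in> F" for p
  proof -
    obtain x where x: "x \<in> K'" "p = (x, rr x)" using pF by (auto simp: F_def)
    then have "x \<in> K" using K'(1) by auto
    then show ?thesis using rr[of x] x by simp
  qed
  have FOm: "snd p > 0 \<and> ball (fst p) (2 * snd p) \<subseteq> Om" if "p \<in> F" for p
    using FV[OF that] VOm by auto
  define W where "W = (\<Union>x\<in>K'. ball x (rr x))"
  have Wo: "open W" by (simp add: W_def open_UN)
  have KW: "K \<subseteq> W" using K'(3) by (simp add: W_def)
  have phiW: "phi F y = 1" if yW: "y \<in> W" for y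
  proof -
    obtain x where x: "x \<in> K'" "y \<in> ball x (rr x)" using yW by (auto simp: W_def)
    show ?thesis
      by (rule phi_in[OF Ffin, of "(x, rr x)"]) (use x rr K'(1) in \<open>auto simp: F_def dist_commute\<close>)
  qed
  have phiV: "phi F y \<le> indicator V y" for y
  proof (cases "y \<in> V")
    case True then show ?thesis using phi_bounds by simp
  next
    case False
    have "phi F y = 0"
    proof (rule phi_out)
      fix p assume p: "p \<in> F"
      have "\<not> dist y (fst p) < 2 * snd p"
      proof
        assume "dist y (fst p) < 2 * snd p"
        then have "y \<in> ball (fst p) (2 * snd p)" by (simp add: dist_commute)
        then show False using FV[OF p] False by auto
      qed
      then show "snd p > 0 \<and> dist y (fst p) \<ge> 2 * snd p" using FV[OF p] by simp
    qed
    then show ?thesis by simp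
  qed
  define L where "L x = (\<Sum>i\<in>Basis. D2phi F i i x)" for x
  have Lc: "continuous_on (closure Om) L" unfolding L_def by (intro continuous_intros phi_cont(3))
  obtain M0 where M0: "\<And>x. x \<in> closure Om \<Longrightarrow> \<bar>L x\<bar> \<le> M0"
    using bounded_on_compact[OF _ Lc] Om(2) compact_closure by blast
  define M where "M = max M0 0"
  have M: "M \<ge> 0" "\<And>x. x \<in> Om \<Longrightarrow> \<bar>L x\<bar> \<le> M" using M0 closure_subset by (force simp: M_def)+
  define mOm where "mOm = measure lborel Om"
  have mOm0: "mOm \<ge> 0" by (simp add: mOm_def)
  have eOm: "emeasure lborel Om = ennreal mOm"
    unfolding mOm_def using emeasure_bounded_finite[OF Om(2)] by (simp add: emeasure_eq_ennreal_measure)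
  define \<tau> where "\<tau> = min T (\<epsilon> / (2 * (M * mOm + 1)))"
  have "0 < M * mOm + 1" using M(1) mOm0 by (simp add: add_nonneg_pos)
  then have "0 < \<epsilon> / (2 * (M * mOm + 1))" using \<epsilon> by simp
  then have \<tau>: "0 < \<tau>" "\<tau> \<le> T" using T by (auto simp: \<tau>_def)
  have \<tau>M: "mOm * (M * \<tau>) \<le> \<epsilon> / 2"
  proof -
    have "\<tau> \<le> \<epsilon> / (2 * (M * mOm + 1))" by (simp add: \<tau>_def)
    moreover have pos: "0 < 2 * (M * mOm + 1)" using M(1) mOm0 by (simp add: add_nonneg_pos)
    ultimately have "\<tau> * (2 * (M * mOm + 1)) \<le> \<epsilon>" by (subst (asm) pos_le_divide_eq[OF pos])
    then have "2 * (M * mOm * \<tau>) \<le> \<epsilon>" using \<tau> by (simp add: algebra_simps)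
    then show ?thesis by (simp add: algebra_simps)
  qed
  define Q where "Q = Om \<times> {0<..<T}"
  have adm: "psi F \<tau> \<in> {psi. C21_l0 Om T psi \<and> (\<exists>U. open U \<and> K \<subseteq> U \<and> (\<forall>x\<in>U. psi x 0 \<ge> 1))}"
  proof (intro CollectI conjI exI[of _ W] ballI)
    show "C21_l0 Om T (psi F \<tau>)" by (rule psi_l0[OF Om(1) FOm \<tau>])
    show "open W" "K \<subseteq> W" by (fact Wo, fact KW)
    fix x assume "x \<in> W" then show "psi F \<tau> x 0 \<ge> 1" using phiW eta_props(2)[OF \<tau>(1)] by (simp add: psi_def)
  qed
  define A where "A p = indicator V (fst p) * (indicator {0<..<T} (snd p) * - Deta \<tau> (snd p))" for p :: "'a \<times> real"
  define B where "B p = indicator Om (fst p) * (indicator {0..\<tau>} (snd p) * M)" for p :: "'a \<times> real"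
  have A0: "A p \<ge> 0" for p using eta_props(5)[OF \<tau>(1), of "snd p"] by (simp add: A_def indicator_def)
  have B0: "B p \<ge> 0" for p using M by (simp add: B_def)
  have pw: "indicator Q p * ennreal \<bar>dt (psi F \<tau>) (fst p) (snd p) + laplacian (psi F \<tau>) (fst p) (snd p)\<bar>
      \<le> ennreal (A p) + ennreal (B p)" for p
  proof (cases "p \<in> Q")
    case False then show ?thesis by simp
  next
    case True
    obtain x t where p: "p = (x, t)" by (cases p)
    have x: "x \<in> Om" and t: "t \<in> {0<..<T}" using True by (auto simp: Q_def p)
    have eq: "dt (psi F \<tau>) x t + laplacian (psi F \<tau>) x t = phi F x * Deta \<tau> t + eta \<tau> t * L x"
      by (simp add: dt_psi lap_psi L_def)
    have "\<bar>phi F x * Deta \<tau> t + eta \<tau> t * L x\<bar> \<le> \<bar>phi F x * Deta \<tau> t\<bar> + \<bar>eta \<tau> t * L x\<bar>" by (rule abs_triangle_ineq)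
    also have "\<bar>phi F x * Deta \<tau> t\<bar> \<le> indicator V x * (- Deta \<tau> t)"
      using phiV[of x] phi_bounds[of F x] eta_props(5)[OF \<tau>(1), of t] by (simp add: abs_mult mult_right_mono_neg)
    also have "\<bar>eta \<tau> t * L x\<bar> \<le> indicator {0..\<tau>} t * M"
    proof (cases "t \<le> \<tau>")
      case True
      have "\<bar>eta \<tau> t * L x\<bar> = eta \<tau> t * \<bar>L x\<bar>" using eta_props(3)[OF \<tau>(1), of t] by (simp add: abs_mult)
      also have "\<dots> \<le> 1 * M" using eta_props(3,4)[OF \<tau>(1), of t] M(2)[OF x] M(1) by (intro mult_mono) auto
      finally show ?thesis using True t by simp
    next
      case False then show ?thesis using eta_props(1)[OF \<tau>(1), of t] by simp
    qed
    finally have "\<bar>phi F x * Deta \<tau> t + eta \<tau> t * L x\<bar> \<le> A p + B p"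
      using x t by (simp add: A_def B_def p)
    then have "ennreal \<bar>dt (psi F \<tau>) x t + laplacian (psi F \<tau>) x t\<bar> \<le> ennreal (A p + B p)"
      unfolding eq by (rule ennreal_leI)
    then show ?thesis using True A0[of p] B0[of p] by (simp add: p ennreal_plus)
  qed
  have Vb[measurable]: "V \<in> sets borel" using Vo by simp
  have Omb[measurable]: "Om \<in> sets borel" using Om(1) by simp
  have Dm[measurable]: "Deta \<tau> \<in> borel_measurable borel" by (simp add: borel_measurable_continuous_onI eta_cont(2))
  have "(\<lambda>p. ennreal (A p)) \<in> borel_measurable (lborel \<Otimes>\<^sub>M lborel)" unfolding A_def by measurable
  then have mA: "(\<lambda>p. ennreal (A p)) \<in> borel_measurable lborel" by (simp add: lborel_prod)
  have "(\<lambda>p. ennreal (B p)) \<in> borel_measurable (lborel \<Otimes>\<^sub>M lborel)" unfolding B_def by measurable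
  then have mB: "(\<lambda>p. ennreal (B p)) \<in> borel_measurable lborel" by (simp add: lborel_prod)
  have "cap Om T K \<le> (\<integral>\<^sup>+ p. indicator Q p * ennreal \<bar>dt (psi F \<tau>) (fst p) (snd p) + laplacian (psi F \<tau>) (fst p) (snd p)\<bar> \<partial>lborel)"
    unfolding cap_def Q_def by (rule INF_lower[OF adm])
  also have "\<dots> \<le> (\<integral>\<^sup>+ p. ennreal (A p) + ennreal (B p) \<partial>lborel)"
    by (rule nn_integral_mono) (rule pw)
  also have "\<dots> = (\<integral>\<^sup>+ p. ennreal (A p) \<partial>lborel) + (\<integral>\<^sup>+ p. ennreal (B p) \<partial>lborel)"
    by (rule nn_integral_add[OF mA mB])
  also have "(\<integral>\<^sup>+ p. ennreal (A p) \<partial>lborel) = emeasure lborel V"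
  proof -
    have "(\<integral>\<^sup>+ p. ennreal (A p) \<partial>lborel) =
      (\<integral>\<^sup>+ p. ennreal (indicator V (fst p)) * ennreal (indicator {0<..<T} (snd p) * - Deta \<tau> (snd p)) \<partial>lborel)"
      by (rule nn_integral_cong) (simp add: A_def indicator_def)
    also have "\<dots> = (\<integral>\<^sup>+ x. ennreal (indicator V x) \<partial>lborel) * (\<integral>\<^sup>+ t. ennreal (indicator {0<..<T} t * - Deta \<tau> t) \<partial>lborel)"
    proof (rule sep_nn)
      show "(\<lambda>x. ennreal (indicator V x)) \<in> borel_measurable borel" using Vo by measurable
      have "Deta \<tau> \<in> borel_measurable borel" by (simp add: borel_measurable_continuous_onI eta_cont(2))
      then show "(\<lambda>t. ennreal (indicator {0<..<T} t * - Deta \<tau> t)) \<in> borel_measurable borel" by measurable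
    qed
    also have "\<dots> = emeasure lborel V" using int_Deta[OF \<tau>] Vb by (simp add: ennreal_indicator)
    finally show ?thesis .
  qed
  also have "(\<integral>\<^sup>+ p. ennreal (B p) \<partial>lborel) = ennreal (mOm * (M * \<tau>))"
  proof -
    have "(\<integral>\<^sup>+ p. ennreal (B p) \<partial>lborel) =
      (\<integral>\<^sup>+ p. ennreal (indicator Om (fst p)) * ennreal (indicator {0..\<tau>} (snd p) * M) \<partial>lborel)"
      by (rule nn_integral_cong) (simp add: B_def ennreal_mult' M)
    also have "\<dots> = (\<integral>\<^sup>+ x. ennreal (indicator Om x) \<partial>lborel) * (\<integral>\<^sup>+ t. ennreal (indicator {0..\<tau>} t * M) \<partial>lborel)"
    proof (rule sep_nn)
      show "(\<lambda>x. ennreal (indicator Om x)) \<in> borel_measurable borel" by measurable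
      show "(\<lambda>t. ennreal (indicator {0..\<tau>} t * M)) \<in> borel_measurable borel" by measurable
    qed
    also have "(\<integral>\<^sup>+ t. ennreal (indicator {0..\<tau>} t * M) \<partial>lborel) = ennreal M * ennreal \<tau>"
    proof -
      have "(\<integral>\<^sup>+ t. ennreal (indicator {0..\<tau>} t * M) \<partial>lborel) = (\<integral>\<^sup>+ t. ennreal M * indicator {0..\<tau>} t \<partial>lborel)"
        by (rule nn_integral_cong) (simp add: indicator_def)
      also have "\<dots> = ennreal M * emeasure lborel {0..\<tau>}" by (rule nn_integral_cmult_indicator) simp
      also have "\<dots> = ennreal M * ennreal \<tau>" using \<tau> by simp
      finally show ?thesis .
    qed
    also have "(\<integral>\<^sup>+ x. ennreal (indicator Om x) \<partial>lborel) = ennreal mOm"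
      using eOm Omb by (simp add: ennreal_indicator)
    also have "ennreal mOm * (ennreal M * ennreal \<tau>) = ennreal (mOm * (M * \<tau>))"
      using M(1) \<tau>(1) mOm0 by (simp add: ennreal_mult)
    finally show ?thesis .
  qed
  also have "emeasure lborel V + ennreal (mOm * (M * \<tau>)) \<le> emeasure lborel K + ennreal (\<epsilon>/2) + ennreal (\<epsilon>/2)"
    by (intro add_mono Vm) (use \<tau>M in \<open>simp add: ennreal_leI\<close>)
  also have "\<dots> = emeasure lborel K + ennreal \<epsilon>"
    using \<epsilon> by (simp add: add.assoc ennreal_plus[symmetric])
  finally show "cap Om T K \<le> emeasure lborel K + ennreal \<epsilon>" .
qed

theorem theorem2p22:
  fixes Om :: "'a::euclidean_space set" and T :: real and K :: "'a set"
  assumes "open Om" and "connected Om" and "bounded Om" and "T > 0"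
    and "compact K" and "K \<subseteq> Om"
  shows "emeasure lborel K = cap Om T K"
proof (rule antisym)
  show "emeasure lborel K \<le> cap Om T K"
    unfolding cap_def
  proof (rule INF_greatest)
    fix psi assume "psi \<in> {psi. C21_l0 Om T psi \<and> (\<exists>U. open U \<and> K \<subseteq> U \<and> (\<forall>x\<in>U. psi x 0 \<ge> 1))}"
    then obtain U where C: "C21_l0 Om T psi" and U: "open U" "K \<subseteq> U" "\<forall>x\<in>U. psi x 0 \<ge> 1" by blast
    show "emeasure lborel K \<le> (\<integral>\<^sup>+ p. indicator (Om \<times> {0<..<T}) p *
              ennreal \<bar>dt psi (fst p) (snd p) + laplacian psi (fst p) (snd p)\<bar> \<partial>lborel)"
      by (rule lower_bound[OF assms(1,3,4,5,6) C U])
  qed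
  show "cap Om T K \<le> emeasure lborel K"
    by (rule upper_bound[OF assms(1,3,4,5,6)])
qed

end
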